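(* Let $K_6=(V,E)$ be the complete graph on 6 nodes and $P_{\mathrm{TSP}}(6)=\operatorname{conv}\{\chi(T): T\text{ a Hamiltonian cycle in }K_6\}$, with circuits taken with respect to a minimal linear description of $P_{\mathrm{TSP}}(6)$ (every inequality facet-defining). Then $\mathcal{CD}(P_{\mathrm{TSP}}(6))=1$.
   Context: $\chi(T)\in\{0,1\}^E$ is the characteristic vector of $T$. Circuits: for a polytope $P=\{\bm{x}: A\bm{x}=\bm{b},\ B\bm{x}\le \bm{d}\}$ given by a fixed linear system, a nonzero vector $\bm{g}$ is a circuit of $P$ if $A\bm{g}=\bm{0}$ and $\operatorname{supp}(B\bm{g})$ is inclusion-minimal among the sets $\operatorname{supp}(B\bm{y})$ with $A\bm{y}=\bm{0}$, $\bm{y}\neq\bm{0}$. A point $\bm{x}''\in P$ is one circuit step from $\bm{x}'\in P$ if $\bm{x}''=\bm{x}'+\alpha\bm{c}$ for a circuit $\bm{c}$ and $\alpha>0$ maximal such that $\bm{x}'+\alpha\bm{c}\in P$. A circuit walk of length $l$ is a sequence $\bm{z}^0,\dots,\bm{z}^l$ in $P$ with each $\bm{z}^i$ one circuit step from $\bm{z}^{i-1}$; the circuit distance is the length of a shortest circuit walk from one point to another, and $\mathcal{CD}(P)$ is the maximum circuit distance over ordered pairs of vertices of $P$. *)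

theory Defs
  imports "HOL-Analysis.Analysis"
begin

typedef edge6 = "{e :: nat set. \<exists>i j. i < 6 \<and> j < 6 \<and> i \<noteq> j \<and> e = {i, j}}"
  by (rule exI[of _ "{0, 1}"]) (simp, rule exI[of _ 0], simp, rule exI[of _ 1], simp)

instance edge6 :: finite
proof
  have "{e :: nat set. \<exists>i j. i < 6 \<and> j < 6 \<and> i \<noteq> j \<and> e = {i, j}}
        \<subseteq> (\<lambda>(i, j). {i, j}) ` ({..<6} \<times> {..<6})"
    by auto
  hence "finite {e :: nat set. \<exists>i j. i < 6 \<and> j < 6 \<and> i \<noteq> j \<and> e = {i, j}}"
    by (rule finite_subset) auto
  hence "finite (Rep_edge6 -` {e :: nat set. \<exists>i j. i < 6 \<and> j < 6 \<and> i \<noteq> j \<and> e = {i, j}})"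
    by (rule finite_vimageI) (simp add: Rep_edge6_inject inj_on_def)
  thus "finite (UNIV :: edge6 set)"
    using Rep_edge6 by (metis (no_types, lifting) UNIV_eq_I vimageI2)
qed

definition ham_cycle6 :: "edge6 set \<Rightarrow> bool" where
  "ham_cycle6 T \<longleftrightarrow> (\<exists>vs :: nat list. length vs = 6 \<and> distinct vs \<and> set vs = {..<6} \<and>
      T = {e. \<exists>k<6. Rep_edge6 e = {vs ! k, vs ! ((k + 1) mod 6)}})"

definition chi :: "edge6 set \<Rightarrow> real ^ edge6" where
  "chi T = (\<chi> e. if e \<in> T then 1 else 0)"

definition P_TSP6 :: "(real ^ edge6) set" where
  "P_TSP6 = convex hull (chi ` {T. ham_cycle6 T})"

definition lin_sys_set ::
  "('a::euclidean_space \<times> real) list \<Rightarrow> ('a \<times> real) list \<Rightarrow> 'a set" where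
  "lin_sys_set eqs ineqs =
     {x. (\<forall>(a, \<beta>) \<in> set eqs. a \<bullet> x = \<beta>) \<and> (\<forall>(c, \<delta>) \<in> set ineqs. c \<bullet> x \<le> \<delta>)}"

definition minimal_description ::
  "'a::euclidean_space set \<Rightarrow> ('a \<times> real) list \<Rightarrow> ('a \<times> real) list \<Rightarrow> bool" where
  "minimal_description P eqs ineqs \<longleftrightarrow>
     P = lin_sys_set eqs ineqs \<and>
     (\<forall>(c, \<delta>) \<in> set ineqs. {x \<in> P. c \<bullet> x = \<delta>} facet_of P)"

definition ineq_supp :: "('a::euclidean_space \<times> real) list \<Rightarrow> 'a \<Rightarrow> nat set" where
  "ineq_supp ineqs g = {i. i < length ineqs \<and> fst (ineqs ! i) \<bullet> g \<noteq> 0}"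

definition in_kernel :: "('a::euclidean_space \<times> real) list \<Rightarrow> 'a \<Rightarrow> bool" where
  "in_kernel eqs g \<longleftrightarrow> (\<forall>(a, \<beta>) \<in> set eqs. a \<bullet> g = 0)"

definition is_circuit ::
  "('a::euclidean_space \<times> real) list \<Rightarrow> ('a \<times> real) list \<Rightarrow> 'a \<Rightarrow> bool" where
  "is_circuit eqs ineqs g \<longleftrightarrow>
     g \<noteq> 0 \<and> in_kernel eqs g \<and>
     \<not> (\<exists>y. y \<noteq> 0 \<and> in_kernel eqs y \<and> ineq_supp ineqs y \<subset> ineq_supp ineqs g)"

definition circuit_step ::
  "('a::euclidean_space \<times> real) list \<Rightarrow> ('a \<times> real) list \<Rightarrow> 'a \<Rightarrow> 'a \<Rightarrow> bool" where
  "circuit_step eqs ineqs x' x'' \<longleftrightarrow>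
     (let P = lin_sys_set eqs ineqs in
      x' \<in> P \<and> x'' \<in> P \<and>
      (\<exists>c \<alpha>. is_circuit eqs ineqs c \<and> \<alpha> > 0 \<and> x'' = x' + \<alpha> *\<^sub>R c \<and>
             (\<forall>\<beta>>\<alpha>. x' + \<beta> *\<^sub>R c \<notin> P)))"

definition circuit_walk ::
  "('a::euclidean_space \<times> real) list \<Rightarrow> ('a \<times> real) list \<Rightarrow> 'a \<Rightarrow> 'a \<Rightarrow> nat \<Rightarrow> bool" where
  "circuit_walk eqs ineqs u v l \<longleftrightarrow>
     (\<exists>z :: nat \<Rightarrow> 'a. z 0 = u \<and> z l = v \<and>
        (\<forall>i\<le>l. z i \<in> lin_sys_set eqs ineqs) \<and>
        (\<forall>i<l. circuit_step eqs ineqs (z i) (z (Suc i))))"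

definition circuit_distance ::
  "('a::euclidean_space \<times> real) list \<Rightarrow> ('a \<times> real) list \<Rightarrow> 'a \<Rightarrow> 'a \<Rightarrow> nat" where
  "circuit_distance eqs ineqs u v = (LEAST l. circuit_walk eqs ineqs u v l)"

definition circuit_diameter ::
  "('a::euclidean_space \<times> real) list \<Rightarrow> ('a \<times> real) list \<Rightarrow> nat" where
  "circuit_diameter eqs ineqs =
     (let P = lin_sys_set eqs ineqs in
      Max {circuit_distance eqs ineqs u v | u v. u extreme_point_of P \<and> v extreme_point_of P})"

end

theory Submission
  imports Defs "HOL-Combinatorics.Multiset_Permutations"
begin


definition ab :: "nat \<Rightarrow> nat \<Rightarrow> edge6" where "ab i j = Abs_edge6 {i, j}"

lemma Rep_ab: "i < 6 \<Longrightarrow> j < 6 \<Longrightarrow> i \<noteq> j \<Longrightarrow> Rep_edge6 (ab i j) = {i, j}"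
  unfolding ab_def by (rule Abs_edge6_inverse) blast

lemma ab_sym: "ab i j = ab j i"
  unfolding ab_def by (simp add: insert_commute)

lemma edge_ex: "\<exists>i j. i < j \<and> j < 6 \<and> e = ab i j"
proof -
  obtain i j where ij: "i < 6" "j < 6" "i \<noteq> j" "Rep_edge6 e = {i, j}"
    using Rep_edge6[of e] by blast
  have e: "e = ab i j" unfolding ab_def using ij(4) by (metis Rep_edge6_inverse)
  show ?thesis
  proof (cases "i < j")
    case True thus ?thesis using ij e by blast
  next
    case False thus ?thesis using ij e ab_sym by (metis linorder_neqE_nat)
  qed
qed

lemma ab_eq_iff: assumes "i < 6" "j < 6" "i \<noteq> j" "k < 6" "l < 6" "k \<noteq> l" shows
   "ab i j = ab k l \<longleftrightarrow> {i, j} = {k, l}"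
proof
  assume "ab i j = ab k l" thus "{i, j} = {k, l}" using Rep_ab[of i j] Rep_ab[of k l] assms by metis
qed (simp add: ab_def)

definition EL :: "(nat \<times> nat) list" where
  "EL = [(0,1),(0,2),(0,3),(0,4),(0,5),(1,2),(1,3),(1,4),(1,5),(2,3),(2,4),(2,5),(3,4),(3,5),(4,5)]"

lemma length_EL: "length EL = 15" by (simp add: EL_def)

lemma EL_valid: "(i, j) \<in> set EL \<Longrightarrow> i < j \<and> j < 6"
  by (auto simp: EL_def)

lemma EL_complete: "i < j \<Longrightarrow> j < (6::nat) \<Longrightarrow> (i, j) \<in> set EL"
proof -
  assume a: "i < j" "j < 6"
  have "\<forall>j\<in>{..<6::nat}. \<forall>i\<in>{..<j}. (i, j) \<in> set EL" by code_simp
  thus ?thesis using a by auto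
qed

lemma distinct_EL: "distinct EL" by (simp add: EL_def)

definition ix :: "nat \<Rightarrow> edge6" where "ix k = ab (fst (EL ! k)) (snd (EL ! k))"

lemma ix_valid: "k < 15 \<Longrightarrow> fst (EL ! k) < snd (EL ! k) \<and> snd (EL ! k) < 6"
  using EL_valid[of "fst (EL ! k)" "snd (EL ! k)"] nth_mem[of k EL] length_EL by auto

lemma bij_ix: "bij_betw ix {..<15} UNIV"
proof (rule bij_betw_imageI)
  show "inj_on ix {..<15}"
  proof (rule inj_onI)
    fix k l assume k: "k \<in> {..<15}" and l: "l \<in> {..<15}" and e: "ix k = ix l"
    have vk: "fst (EL ! k) < snd (EL ! k)" "snd (EL ! k) < 6" using ix_valid k by auto
    have vl: "fst (EL ! l) < snd (EL ! l)" "snd (EL ! l) < 6" using ix_valid l by auto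
    have "{fst (EL ! k), snd (EL ! k)} = {fst (EL ! l), snd (EL ! l)}"
      using e vk vl unfolding ix_def by (subst ab_eq_iff[symmetric]) auto
    hence "EL ! k = EL ! l" using vk vl by (auto simp: doubleton_eq_iff prod_eq_iff)
    thus "k = l" using distinct_EL k l length_EL by (simp add: nth_eq_iff_index_eq)
  qed
  show "ix ` {..<15} = UNIV"
  proof (rule set_eqI, rule iffI)
    fix e :: edge6
    obtain i j where ij: "i < j" "j < 6" "e = ab i j" using edge_ex by blast
    then obtain k where "k < length EL" "EL ! k = (i, j)" using EL_complete[of i j]
      by (metis in_set_conv_nth)
    thus "e \<in> ix ` {..<15}" using ij length_EL unfolding ix_def by force
  qed auto
qed

lemma sum_edges: "(\<Sum>e\<in>UNIV. h e) = (\<Sum>k<15. h (ix k))"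
  using sum.reindex_bij_betw[OF bij_ix, of h] by simp

lemma inner_ix: "(x::real^edge6) \<bullet> y = (\<Sum>k<15. x $ ix k * y $ ix k)"
  unfolding inner_vec_def by (simp add: sum_edges)

lemma vec_eq_ix: "(\<And>k. k < 15 \<Longrightarrow> (x::real^edge6) $ ix k = y $ ix k) \<Longrightarrow> x = y"
proof (rule vec_eq_iff[THEN iffD2], rule allI)
  fix e :: edge6 assume h: "\<And>k. k < 15 \<Longrightarrow> x $ ix k = y $ ix k"
  obtain k where "k < 15" "e = ix k" using bij_ix by (metis UNIV_I bij_betw_iff_bijections lessThan_iff)
  thus "x $ e = y $ e" using h by simp
qed



lemma mod6_suc: "(l::nat) < 6 \<Longrightarrow> Suc l mod 6 = (if l = 5 then 0 else Suc l)" by auto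
lemma no2: "(k::nat) < 6 \<Longrightarrow> l < 6 \<Longrightarrow> k = (l + 1) mod 6 \<Longrightarrow> (k + 1) mod 6 = l \<Longrightarrow> False"
  by (simp add: mod6_suc split: if_splits)

lemma lt6: "(k::nat) < 6 \<Longrightarrow> k = 0 \<or> k = 1 \<or> k = 2 \<or> k = 3 \<or> k = 4 \<or> k = 5" by auto

definition symF :: "(nat \<Rightarrow> nat \<Rightarrow> int) \<Rightarrow> bool" where "symF F \<longleftrightarrow> (\<forall>i j. F i j = F j i)"

definition vF :: "(nat \<Rightarrow> nat \<Rightarrow> int) \<Rightarrow> real ^ edge6" where
  "vF F = (\<chi> e. of_int (F (Min (Rep_edge6 e)) (Max (Rep_edge6 e))))"

lemma vF_ab: "i < j \<Longrightarrow> j < 6 \<Longrightarrow> vF F $ ab i j = of_int (F i j)"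
  by (simp add: vF_def Rep_ab)

lemma vF_ab_sym: assumes "symF F" "i < 6" "j < 6" "i \<noteq> j" shows "vF F $ ab i j = of_int (F i j)"
proof (cases "i < j")
  case True thus ?thesis using vF_ab[of i j F] \<open>j < 6\<close> by simp
next
  case False
  hence "j < i" using \<open>i \<noteq> j\<close> by simp
  hence "vF F $ ab j i = of_int (F j i)" using vF_ab[of j i F] \<open>i < 6\<close> by simp
  thus ?thesis using \<open>symF F\<close> ab_sym[of i j] unfolding symF_def by simp
qed

lemma vF_ix: "k < 15 \<Longrightarrow> vF F $ ix k = of_int (F (fst (EL ! k)) (snd (EL ! k)))"
  using ix_valid[of k] by (simp add: ix_def vF_ab)

definition lf :: "int list \<Rightarrow> real ^ edge6 \<Rightarrow> real" where
  "lf c x = (\<Sum>k<15. of_int (c ! k) * x $ ix k)"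

definition coefs :: "(nat \<Rightarrow> nat \<Rightarrow> int) \<Rightarrow> int list" where
  "coefs F = map (\<lambda>(i, j). F i j) EL"

lemma vF_inner: "vF F \<bullet> x = lf (coefs F) x"
  unfolding inner_ix lf_def coefs_def
  by (rule sum.cong) (auto simp: vF_ix length_EL split: prod.splits)

definition cycE :: "nat list \<Rightarrow> edge6 set" where
  "cycE vs = {e. \<exists>k<6. Rep_edge6 e = {vs ! k, vs ! ((k + 1) mod 6)}}"

definition perms6 :: "nat list set" where
  "perms6 = {vs. length vs = 6 \<and> distinct vs \<and> set vs = {..<6}}"

lemma ham_iff: "ham_cycle6 T \<longleftrightarrow> (\<exists>vs\<in>perms6. T = cycE vs)"
  unfolding ham_cycle6_def perms6_def cycE_def by blast

definition cycedge :: "nat list \<Rightarrow> nat \<Rightarrow> nat \<Rightarrow> bool" where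
  "cycedge vs i j = (\<exists>k\<in>set [0..<6]. (vs ! k = i \<and> vs ! ((k + 1) mod 6) = j) \<or> (vs ! k = j \<and> vs ! ((k + 1) mod 6) = i))"

lemma ab_in_cycE: "i < 6 \<Longrightarrow> j < 6 \<Longrightarrow> i \<noteq> j \<Longrightarrow> ab i j \<in> cycE vs \<longleftrightarrow> cycedge vs i j"
  by (auto simp: cycE_def cycedge_def Rep_ab doubleton_eq_iff)

definition chi_int :: "nat list \<Rightarrow> int list" where
  "chi_int vs = map (\<lambda>(i, j). if cycedge vs i j then 1 else 0) EL"

lemma chi_ix: "k < 15 \<Longrightarrow> chi (cycE vs) $ ix k = of_int (chi_int vs ! k)"
proof -
  assume k: "k < 15"
  have v: "fst (EL ! k) < snd (EL ! k)" "snd (EL ! k) < 6" using ix_valid[OF k] by auto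
  show ?thesis using k v length_EL
    by (auto simp: chi_def chi_int_def ix_def ab_in_cycE split: prod.splits)
qed

lemma perms6_nth: "vs \<in> perms6 \<Longrightarrow> k < 6 \<Longrightarrow> vs ! k < 6"
  unfolding perms6_def using nth_mem by fastforce

lemma perms6_neq: assumes "vs \<in> perms6" "k < 6" shows "vs ! k \<noteq> vs ! ((k + 1) mod 6)"
proof
  assume e: "vs ! k = vs ! ((k + 1) mod 6)"
  have d: "distinct vs" "length vs = 6" using assms(1) unfolding perms6_def by auto
  have "(k + 1) mod 6 < length vs" using d by simp
  hence "k = (k + 1) mod 6" using nth_eq_iff_index_eq[OF d(1)] e assms(2) d(2) by simp
  thus False using assms(2) by (simp add: mod6_suc split: if_splits)
qed

lemma cycE_img: assumes "vs \<in> perms6"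
  shows "cycE vs = (\<lambda>k. ab (vs ! k) (vs ! ((k + 1) mod 6))) ` {..<6}"
proof (rule set_eqI)
  fix e
  show "e \<in> cycE vs \<longleftrightarrow> e \<in> (\<lambda>k. ab (vs ! k) (vs ! ((k + 1) mod 6))) ` {..<6}"
  proof
    assume "e \<in> cycE vs"
    then obtain k where k: "k < 6" "Rep_edge6 e = {vs ! k, vs ! ((k + 1) mod 6)}" unfolding cycE_def by blast
    hence "e = ab (vs ! k) (vs ! ((k + 1) mod 6))" unfolding ab_def by (metis Rep_edge6_inverse)
    thus "e \<in> (\<lambda>k. ab (vs ! k) (vs ! ((k + 1) mod 6))) ` {..<6}" using k by blast
  next
    assume "e \<in> (\<lambda>k. ab (vs ! k) (vs ! ((k + 1) mod 6))) ` {..<6}"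
    then obtain k where k: "k < 6" "e = ab (vs ! k) (vs ! ((k + 1) mod 6))" by blast
    have "Rep_edge6 e = {vs ! k, vs ! ((k + 1) mod 6)}"
      using k perms6_nth[OF assms] perms6_neq[OF assms] by (simp add: Rep_ab)
    thus "e \<in> cycE vs" using k unfolding cycE_def by blast
  qed
qed

lemma cyc_inj: assumes "vs \<in> perms6"
  shows "inj_on (\<lambda>k. ab (vs ! k) (vs ! ((k + 1) mod 6))) {..<6}"
proof (rule inj_onI)
  fix k l assume k: "k \<in> {..<6}" and l: "l \<in> {..<6}"
    and e: "ab (vs ! k) (vs ! ((k + 1) mod 6)) = ab (vs ! l) (vs ! ((l + 1) mod 6))"
  have d: "distinct vs" "length vs = 6" using assms unfolding perms6_def by auto
  have "{vs ! k, vs ! ((k + 1) mod 6)} = {vs ! l, vs ! ((l + 1) mod 6)}"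
    using e k l perms6_nth[OF assms] perms6_neq[OF assms]
    by (subst ab_eq_iff[symmetric]) auto
  hence "(vs ! k = vs ! l \<and> vs ! ((k + 1) mod 6) = vs ! ((l + 1) mod 6)) \<or>
         (vs ! k = vs ! ((l + 1) mod 6) \<and> vs ! ((k + 1) mod 6) = vs ! l)"
    by (auto simp: doubleton_eq_iff)
  hence "k = l \<or> (k = (l + 1) mod 6 \<and> (k + 1) mod 6 = l)"
    using d k l by (auto simp: nth_eq_iff_index_eq)
  thus "k = l" using k l no2[of k l] by auto
qed

definition cval :: "(nat \<Rightarrow> nat \<Rightarrow> int) \<Rightarrow> nat list \<Rightarrow> int" where
  "cval F vs = sum_list (map (\<lambda>k. F (vs ! k) (vs ! ((k + 1) mod 6))) [0..<6])"

lemma vF_chi: assumes "symF F" "vs \<in> perms6"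
  shows "vF F \<bullet> chi (cycE vs) = of_int (cval F vs)"
proof -
  have "vF F \<bullet> chi (cycE vs) = (\<Sum>e\<in>UNIV. if e \<in> cycE vs then vF F $ e else 0)"
    unfolding inner_vec_def chi_def by (intro sum.cong) auto
  also have "\<dots> = (\<Sum>e\<in>cycE vs. vF F $ e)"
    using sum.inter_restrict[of UNIV "\<lambda>e. vF F $ e" "cycE vs", symmetric] by simp
  also have "\<dots> = (\<Sum>k<6. vF F $ ab (vs ! k) (vs ! ((k + 1) mod 6)))"
    unfolding cycE_img[OF assms(2)] sum.reindex[OF cyc_inj[OF assms(2)]] by (simp only: o_def)
  also have "\<dots> = (\<Sum>k<6. of_int (F (vs ! k) (vs ! ((k + 1) mod 6))))"
  proof (rule sum.cong[OF refl])
    fix k assume "k \<in> {..<6::nat}"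
    hence k: "k < 6" by simp
    show "vF F $ ab (vs ! k) (vs ! ((k + 1) mod 6)) = of_int (F (vs ! k) (vs ! ((k + 1) mod 6)))"
      by (rule vF_ab_sym[OF assms(1) perms6_nth[OF assms(2) k] perms6_nth[OF assms(2)] perms6_neq[OF assms(2) k]]) simp
  qed
  also have "\<dots> = of_int (cval F vs)"
    unfolding cval_def interv_sum_list_conv_sum_set_nat of_int_sum set_upt atLeast0LessThan ..
  finally show ?thesis .
qed

lemma cycE_rotate1: assumes "length vs = 6" shows "cycE (rotate1 vs) = cycE vs"
proof -
  have r: "k < 6 \<Longrightarrow> rotate1 vs ! k = vs ! ((k + 1) mod 6)" for k
    using assms by (simp add: nth_rotate1)
  show ?thesis
  proof (rule set_eqI)
    fix e
    show "e \<in> cycE (rotate1 vs) \<longleftrightarrow> e \<in> cycE vs"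
    proof
      assume "e \<in> cycE (rotate1 vs)"
      then obtain k where k: "k < 6" "Rep_edge6 e = {rotate1 vs ! k, rotate1 vs ! ((k + 1) mod 6)}"
        unfolding cycE_def by blast
      have "((k + 1) mod 6 + 1) mod 6 = ((k + 1) mod 6 + 1) mod 6" by simp
      hence "Rep_edge6 e = {vs ! ((k + 1) mod 6), vs ! (((k + 1) mod 6 + 1) mod 6)}"
        using k r by simp
      moreover have "(k + 1) mod 6 < 6" by simp
      ultimately show "e \<in> cycE vs" unfolding cycE_def by blast
    next
      assume "e \<in> cycE vs"
      then obtain k where k: "k < 6" "Rep_edge6 e = {vs ! k, vs ! ((k + 1) mod 6)}"
        unfolding cycE_def by blast
      define k' where "k' = (k + 5) mod 6"
      have k'6: "k' < 6" unfolding k'_def by simp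
      have "(k' + 1) mod 6 = k" "((k' + 1) mod 6 + 1) mod 6 = (k + 1) mod 6"
        unfolding k'_def using k(1) lt6[of k] by auto
      hence "Rep_edge6 e = {rotate1 vs ! k', rotate1 vs ! ((k' + 1) mod 6)}"
        using k r k'6 by simp
      thus "e \<in> cycE (rotate1 vs)" unfolding cycE_def using k'6 by blast
    qed
  qed
qed

lemma cycE_rotate: assumes "length vs = 6" shows "cycE (rotate m vs) = cycE vs"
proof (induction m)
  case (Suc m)
  have "cycE (rotate (Suc m) vs) = cycE (rotate1 (rotate m vs))" by simp
  also have "\<dots> = cycE (rotate m vs)" using assms by (intro cycE_rotate1) simp
  finally show ?case using Suc by simp
qed simp

definition P5 :: "nat list list" where "P5 = permutations_of_list_impl [1,2,3,4,5]"

lemma P5_perms6: "t \<in> set P5 \<Longrightarrow> 0 # t \<in> perms6"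
proof -
  assume t: "t \<in> set P5"
  have m: "mset t = mset [1,2,3,4,5::nat]" using t unfolding P5_def set_permutations_of_list_impl
    by (simp add: permutations_of_multiset_def)
  have "set t = set [1,2,3,4,5::nat]" using mset_eq_setD[OF m] .
  moreover have "distinct t" using mset_eq_imp_distinct_iff[OF m] by simp
  ultimately have "set (0 # t) = {..<6}" "distinct (0 # t)" "length (0 # t) = 6"
    using distinct_card[of t] by (auto simp: lessThan_nat_numeral)
  thus ?thesis unfolding perms6_def by blast
qed

lemma canon: assumes "vs \<in> perms6" shows "\<exists>t\<in>set P5. cycE vs = cycE (0 # t)"
proof -
  have vs: "length vs = 6" "distinct vs" "set vs = {..<6}" using assms unfolding perms6_def by auto
  obtain m where m: "m < 6" "vs ! m = 0" using vs by (metis in_set_conv_nth lessThan_iff zero_less_numeral)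
  have rl: "length (rotate m vs) = 6" using vs by simp
  have r0: "rotate m vs ! 0 = 0" using vs m by (simp add: nth_rotate)
  obtain t where rt: "rotate m vs = 0 # t" using rl r0 by (cases "rotate m vs") auto
  have "distinct (0 # t)" "set (0 # t) = {..<6}" using vs rt[symmetric] by auto
  hence n0: "0 \<notin> set t" and dt: "distinct t" by simp_all
  have "set t = set (0 # t) - {0}" using n0 by simp
  hence st: "set t = {..<6} - {0}" using \<open>set (0 # t) = {..<6}\<close> by (simp only:)
  have "{..<6::nat} - {0} = set [1,2,3,4,5]" by (auto simp: lessThan_nat_numeral)
  hence "mset t = mset [1,2,3,4,5::nat]" using st dt set_eq_iff_mset_eq_distinct[of t "[1,2,3,4,5::nat]"] by simp
  hence "t \<in> set P5" unfolding P5_def set_permutations_of_list_impl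
    by (simp add: permutations_of_multiset_def)
  thus ?thesis using cycE_rotate[OF vs(1), of m] rt by auto
qed



section \<open>Node permutations\<close>

definition emap :: "(nat \<Rightarrow> nat) \<Rightarrow> edge6 \<Rightarrow> edge6" where
  "emap \<sigma> e = Abs_edge6 (\<sigma> ` Rep_edge6 e)"

lemma perm6_lt: "\<sigma> permutes {..<6} \<Longrightarrow> i < 6 \<Longrightarrow> \<sigma> i < (6::nat)"
  using permutes_in_image by fastforce

lemma perm6_neq: "\<sigma> permutes {..<6} \<Longrightarrow> i \<noteq> j \<Longrightarrow> \<sigma> i \<noteq> \<sigma> j"
  by (metis permutes_inverses(2))

lemma emap_ab: "\<sigma> permutes {..<6} \<Longrightarrow> i < 6 \<Longrightarrow> j < 6 \<Longrightarrow> i \<noteq> j \<Longrightarrow> emap \<sigma> (ab i j) = ab (\<sigma> i) (\<sigma> j)"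
  unfolding emap_def by (simp add: Rep_ab, simp add: ab_def)

lemma emap_inv1: assumes "\<sigma> permutes {..<6}" shows "emap \<sigma> (emap (inv \<sigma>) e) = e"
proof -
  obtain i j where ij: "i < j" "j < 6" "e = ab i j" using edge_ex by blast
  have s': "inv \<sigma> permutes {..<6}" using assms by (rule permutes_inv)
  have "emap (inv \<sigma>) e = ab (inv \<sigma> i) (inv \<sigma> j)" using ij emap_ab[OF s'] by simp
  moreover have "inv \<sigma> i < 6" "inv \<sigma> j < 6" "inv \<sigma> i \<noteq> inv \<sigma> j"
    using ij perm6_lt[OF s'] perm6_neq[OF s'] by auto
  ultimately show ?thesis using emap_ab[OF assms] ij permutes_inverses(1)[OF assms] by simp
qed

lemma emap_inv2: assumes "\<sigma> permutes {..<6}" shows "emap (inv \<sigma>) (emap \<sigma> e) = e"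
proof -
  have "emap (inv \<sigma>) (emap (inv (inv \<sigma>)) e) = e" using emap_inv1 permutes_inv[OF assms] by blast
  thus ?thesis using inv_inv_eq[OF permutes_bij[OF assms]] by simp
qed

definition pullv :: "(nat \<Rightarrow> nat) \<Rightarrow> real ^ edge6 \<Rightarrow> real ^ edge6" where
  "pullv \<sigma> x = (\<chi> e. x $ emap \<sigma> e)"

lemma pullv_inner: assumes "\<sigma> permutes {..<6}" shows "pullv \<sigma> x \<bullet> pullv \<sigma> y = x \<bullet> y"
proof -
  have "pullv \<sigma> x \<bullet> pullv \<sigma> y = (\<Sum>e\<in>UNIV. x $ emap \<sigma> e * y $ emap \<sigma> e)"
    unfolding inner_vec_def pullv_def by simp
  also have "\<dots> = (\<Sum>e\<in>UNIV. x $ e * y $ e)"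
    by (rule sum.reindex_bij_witness[of _ "emap (inv \<sigma>)" "emap \<sigma>"])
       (auto simp: emap_inv1[OF assms] emap_inv2[OF assms])
  finally show ?thesis unfolding inner_vec_def by simp
qed

lemma pullv_pullv1: "\<sigma> permutes {..<6} \<Longrightarrow> pullv \<sigma> (pullv (inv \<sigma>) x) = x"
  by (simp add: pullv_def vec_eq_iff emap_inv2)

lemma pullv_pullv2: "\<sigma> permutes {..<6} \<Longrightarrow> pullv (inv \<sigma>) (pullv \<sigma> x) = x"
  by (simp add: pullv_def vec_eq_iff emap_inv1)

lemma pullv_diff: "pullv \<sigma> (x - y) = pullv \<sigma> x - pullv \<sigma> y"
  by (simp add: pullv_def vec_eq_iff)

lemma pullv_scale: "pullv \<sigma> (c *\<^sub>R x) = c *\<^sub>R pullv \<sigma> x"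
  by (simp add: pullv_def vec_eq_iff)

lemma linear_pullv: "linear (pullv \<sigma>)"
  by (rule linearI) (simp_all add: pullv_def vec_eq_iff)

lemma vF_cong: "(\<And>i j. i < 6 \<Longrightarrow> j < 6 \<Longrightarrow> F i j = G i j) \<Longrightarrow> vF F = vF G"
proof -
  assume h: "\<And>i j. i < 6 \<Longrightarrow> j < 6 \<Longrightarrow> F i j = G i j"
  show ?thesis unfolding vec_eq_iff
  proof
    fix e obtain i j where ij: "i < j" "j < 6" "e = ab i j" using edge_ex by blast
    thus "vF F $ e = vF G $ e" using h by (simp add: vF_ab)
  qed
qed

lemma pullv_vF: assumes "\<sigma> permutes {..<6}" "symF F"
  shows "pullv \<sigma> (vF F) = vF (\<lambda>i j. F (\<sigma> i) (\<sigma> j))"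
  unfolding vec_eq_iff
proof
  fix e obtain i j where ij: "i < j" "j < 6" "e = ab i j" using edge_ex by blast
  have "pullv \<sigma> (vF F) $ e = vF F $ ab (\<sigma> i) (\<sigma> j)"
    using ij by (simp add: pullv_def emap_ab[OF assms(1)])
  also have "\<dots> = of_int (F (\<sigma> i) (\<sigma> j))"
    using ij by (intro vF_ab_sym[OF assms(2)] perm6_lt[OF assms(1)] perm6_neq[OF assms(1)]) auto
  finally show "pullv \<sigma> (vF F) $ e = vF (\<lambda>i j. F (\<sigma> i) (\<sigma> j)) $ e" using ij by (simp add: vF_ab)
qed

lemma chi_emap: assumes "\<sigma> permutes {..<6}" shows "chi (emap \<sigma> ` T) = pullv (inv \<sigma>) (chi T)"
  unfolding vec_eq_iff
proof
  fix e
  have "e \<in> emap \<sigma> ` T \<longleftrightarrow> emap (inv \<sigma>) e \<in> T"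
    by (metis emap_inv1[OF assms] emap_inv2[OF assms] image_iff)
  thus "chi (emap \<sigma> ` T) $ e = pullv (inv \<sigma>) (chi T) $ e" by (simp add: chi_def pullv_def)
qed

lemma map_perms6: assumes "\<sigma> permutes {..<6}" "vs \<in> perms6" shows "map \<sigma> vs \<in> perms6"
proof -
  have "inj_on \<sigma> (set vs)" using inj_on_subset[OF permutes_inj[OF assms(1)] subset_UNIV] .
  thus ?thesis using assms(2) permutes_image[OF assms(1)] unfolding perms6_def by (auto simp: distinct_map)
qed

lemma cycE_map: assumes "\<sigma> permutes {..<6}" "vs \<in> perms6" shows "cycE (map \<sigma> vs) = emap \<sigma> ` cycE vs"
proof -
  have l: "length vs = 6" using assms(2) unfolding perms6_def by simp
  have "cycE (map \<sigma> vs) = (\<lambda>k. ab (\<sigma> (vs ! k)) (\<sigma> (vs ! ((k + 1) mod 6)))) ` {..<6}"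
    unfolding cycE_img[OF map_perms6[OF assms]] using l by (intro image_cong) auto
  also have "\<dots> = emap \<sigma> ` (\<lambda>k. ab (vs ! k) (vs ! ((k + 1) mod 6))) ` {..<6}"
    unfolding image_image
    by (intro image_cong refl emap_ab[OF assms(1), symmetric] perms6_nth[OF assms(2)] perms6_neq[OF assms(2)]) auto
  finally show ?thesis unfolding cycE_img[OF assms(2)] .
qed

lemma ham_emap: assumes "\<sigma> permutes {..<6}" "ham_cycle6 T" shows "ham_cycle6 (emap \<sigma> ` T)"
  using assms cycE_map map_perms6 unfolding ham_iff by metis

lemma emap_emap_inv: "\<sigma> permutes {..<6} \<Longrightarrow> emap \<sigma> ` emap (inv \<sigma>) ` T = T"
  by (simp add: image_image emap_inv1)

lemma pullv_chi: assumes "\<sigma> permutes {..<6}" shows "pullv \<sigma> (chi T) = chi (emap (inv \<sigma>) ` T)"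
  using chi_emap[OF permutes_inv[OF assms], of T] inv_inv_eq[OF permutes_bij[OF assms]] by simp

definition degF :: "nat \<Rightarrow> nat \<Rightarrow> nat \<Rightarrow> int" where
  "degF v i j = (if i = v \<or> j = v then 1 else 0)"

lemma symF_degF: "symF (degF v)" by (auto simp: symF_def degF_def)

definition Dset :: "(real ^ edge6) set" where
  "Dset = {x. \<forall>v<6. vF (degF v) \<bullet> x = 0}"

lemma pullv_D: assumes "\<sigma> permutes {..<6}" "x \<in> Dset" shows "pullv \<sigma> x \<in> Dset"
  unfolding Dset_def
proof (intro CollectI allI impI)
  fix v :: nat assume v: "v < 6"
  have s': "inv \<sigma> permutes {..<6}" using assms(1) by (rule permutes_inv)
  have "vF (degF v) \<bullet> pullv \<sigma> x = pullv \<sigma> (pullv (inv \<sigma>) (vF (degF v))) \<bullet> pullv \<sigma> x"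
    using pullv_pullv1[OF assms(1)] by simp
  also have "\<dots> = pullv (inv \<sigma>) (vF (degF v)) \<bullet> x" by (rule pullv_inner[OF assms(1)])
  also have "pullv (inv \<sigma>) (vF (degF v)) = vF (\<lambda>i j. degF v (inv \<sigma> i) (inv \<sigma> j))"
    by (rule pullv_vF[OF s' symF_degF])
  also have "\<dots> = vF (degF (\<sigma> v))"
    unfolding degF_def by (metis permutes_inverses[OF assms(1)])
  also have "vF (degF (\<sigma> v)) \<bullet> x = 0" using assms(2) perm6_lt[OF assms(1) v] unfolding Dset_def by blast
  finally show "vF (degF v) \<bullet> pullv \<sigma> x = 0" .
qed

section \<open>Good facet normals\<close>

definition good :: "real ^ edge6 \<Rightarrow> real \<Rightarrow> bool" where
  "good f \<phi> \<longleftrightarrow> (\<forall>T. ham_cycle6 T \<longrightarrow> f \<bullet> chi T \<le> \<phi>) \<and> (\<exists>T. ham_cycle6 T \<and> f \<bullet> chi T < \<phi>) \<and>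
     (\<exists>T0. ham_cycle6 T0 \<and> f \<bullet> chi T0 = \<phi> \<and>
        (\<forall>x\<in>Dset. f \<bullet> x = 0 \<longrightarrow> x \<in> span {chi T - chi T0 | T. ham_cycle6 T \<and> f \<bullet> chi T = \<phi>}))"

lemma good_pullv: assumes s: "\<sigma> permutes {..<6}" and g: "good f \<phi>" shows "good (pullv \<sigma> f) \<phi>"
proof -
  have s': "inv \<sigma> permutes {..<6}" using s by (rule permutes_inv)
  have key: "pullv \<sigma> f \<bullet> chi (emap (inv \<sigma>) ` T) = f \<bullet> chi T" for T
    using pullv_inner[OF s, of f "chi T"] pullv_chi[OF s, of T] by simp
  have hamI: "ham_cycle6 T \<Longrightarrow> ham_cycle6 (emap (inv \<sigma>) ` T)" for T by (rule ham_emap[OF s'])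
  have c1: "\<forall>T. ham_cycle6 T \<longrightarrow> pullv \<sigma> f \<bullet> chi T \<le> \<phi>"
  proof (intro allI impI)
    fix T assume T: "ham_cycle6 T"
    have "T = emap (inv \<sigma>) ` (emap \<sigma> ` T)" using emap_emap_inv[OF s', of "emap \<sigma> ` T"]
      inv_inv_eq[OF permutes_bij[OF s]] by (simp add: image_image emap_inv2[OF s])
    hence "pullv \<sigma> f \<bullet> chi T = f \<bullet> chi (emap \<sigma> ` T)" using key by metis
    also have "\<dots> \<le> \<phi>" using g T ham_emap[OF s T] unfolding good_def by blast
    finally show "pullv \<sigma> f \<bullet> chi T \<le> \<phi>" .
  qed
  obtain T1 where T1: "ham_cycle6 T1" "f \<bullet> chi T1 < \<phi>" using g unfolding good_def by blast
  have c2: "\<exists>T. ham_cycle6 T \<and> pullv \<sigma> f \<bullet> chi T < \<phi>"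
    using hamI[OF T1(1)] key[of T1] T1(2) by auto
  obtain T0 where T0: "ham_cycle6 T0" "f \<bullet> chi T0 = \<phi>"
    "\<forall>x\<in>Dset. f \<bullet> x = 0 \<longrightarrow> x \<in> span {chi T - chi T0 | T. ham_cycle6 T \<and> f \<bullet> chi T = \<phi>}"
    using g unfolding good_def by blast
  define T0' where "T0' = emap (inv \<sigma>) ` T0"
  have c3: "\<forall>x\<in>Dset. pullv \<sigma> f \<bullet> x = 0 \<longrightarrow>
     x \<in> span {chi T - chi T0' | T. ham_cycle6 T \<and> pullv \<sigma> f \<bullet> chi T = \<phi>}"
  proof (intro ballI impI)
    fix x assume x: "x \<in> Dset" "pullv \<sigma> f \<bullet> x = 0"
    define x' where "x' = pullv (inv \<sigma>) x"
    have x'D: "x' \<in> Dset" unfolding x'_def by (rule pullv_D[OF s' x(1)])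
    have "f \<bullet> x' = pullv \<sigma> f \<bullet> pullv \<sigma> x'" by (rule pullv_inner[OF s, symmetric])
    also have "pullv \<sigma> x' = x" unfolding x'_def by (rule pullv_pullv1[OF s])
    finally have "f \<bullet> x' = 0" using x(2) by simp
    hence "x' \<in> span {chi T - chi T0 | T. ham_cycle6 T \<and> f \<bullet> chi T = \<phi>}" using T0(3) x'D by blast
    hence "pullv \<sigma> x' \<in> pullv \<sigma> ` span {chi T - chi T0 | T. ham_cycle6 T \<and> f \<bullet> chi T = \<phi>}" by blast
    also have "\<dots> = span (pullv \<sigma> ` {chi T - chi T0 | T. ham_cycle6 T \<and> f \<bullet> chi T = \<phi>})"
      by (rule span_linear_image[OF linear_pullv, symmetric])
    also have "\<dots> \<subseteq> span {chi T - chi T0' | T. ham_cycle6 T \<and> pullv \<sigma> f \<bullet> chi T = \<phi>}"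
    proof (rule span_mono, rule subsetI)
      fix z assume "z \<in> pullv \<sigma> ` {chi T - chi T0 | T. ham_cycle6 T \<and> f \<bullet> chi T = \<phi>}"
      then obtain T where T: "ham_cycle6 T" "f \<bullet> chi T = \<phi>" "z = pullv \<sigma> (chi T - chi T0)" by blast
      have "z = chi (emap (inv \<sigma>) ` T) - chi T0'"
        unfolding T(3) T0'_def pullv_diff pullv_chi[OF s] ..
      moreover have "pullv \<sigma> f \<bullet> chi (emap (inv \<sigma>) ` T) = \<phi>" using key T(2) by simp
      ultimately show "z \<in> {chi T - chi T0' | T. ham_cycle6 T \<and> pullv \<sigma> f \<bullet> chi T = \<phi>}"
        using hamI[OF T(1)] by blast
    qed
    finally show "x \<in> span {chi T - chi T0' | T. ham_cycle6 T \<and> pullv \<sigma> f \<bullet> chi T = \<phi>}"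
      using \<open>pullv \<sigma> x' = x\<close> by simp
  qed
  have "ham_cycle6 T0'" "pullv \<sigma> f \<bullet> chi T0' = \<phi>" using hamI[OF T0(1)] key T0(2) unfolding T0'_def by auto
  thus ?thesis unfolding good_def using c1 c2 c3 by blast
qed



lemma finite_ham: "finite {T. ham_cycle6 T}" by simp

lemma chi_in_P: "ham_cycle6 T \<Longrightarrow> chi T \<in> P_TSP6"
  unfolding P_TSP6_def by (rule hull_inc) blast

lemma P_le: assumes "\<forall>T. ham_cycle6 T \<longrightarrow> f \<bullet> chi T \<le> \<phi>" "x \<in> P_TSP6" shows "f \<bullet> x \<le> \<phi>"
proof -
  have "P_TSP6 \<subseteq> {x. f \<bullet> x \<le> \<phi>}" unfolding P_TSP6_def
    by (rule hull_minimal) (use assms(1) convex_halfspace_le in auto)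
  thus ?thesis using assms(2) by blast
qed

lemma P_eq: assumes "\<forall>T. ham_cycle6 T \<longrightarrow> f \<bullet> chi T = \<phi>" "x \<in> P_TSP6" shows "f \<bullet> x = \<phi>"
proof -
  have "P_TSP6 \<subseteq> {x. f \<bullet> x = \<phi>}" unfolding P_TSP6_def
    by (rule hull_minimal) (use assms(1) convex_hyperplane in auto)
  thus ?thesis using assms(2) by blast
qed

lemma ham_C0: "ham_cycle6 (cycE [0,1,2,3,4,5])"
proof -
  have "[1,2,3,4,5] \<in> set P5" unfolding P5_def by code_simp
  thus ?thesis using P5_perms6 ham_iff by fastforce
qed

lemma ham_all: assumes "\<forall>t\<in>set P5. Q (cycE (0 # t))" "ham_cycle6 T" shows "Q T"
proof -
  obtain vs where vs: "vs \<in> perms6" "T = cycE vs" using assms(2) ham_iff by blast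
  obtain t where t: "t \<in> set P5" "cycE vs = cycE (0 # t)" using canon[OF vs(1)] by blast
  show ?thesis using assms(1) t vs(2) by simp
qed

lemma deg_check: "\<forall>t\<in>set P5. \<forall>v\<in>set [0..<6]. cval (degF v) (0 # t) = 2"
  unfolding P5_def cval_def degF_def by code_simp

lemma ham_deg: assumes "ham_cycle6 T" "v < 6" shows "vF (degF v) \<bullet> chi T = 2"
proof -
  have "\<forall>t\<in>set P5. vF (degF v) \<bullet> chi (cycE (0 # t)) = 2"
  proof
    fix t assume t: "t \<in> set P5"
    have v: "v \<in> set [0..<6]" using assms(2) by simp
    have "cval (degF v) (0 # t) = 2" using bspec[OF bspec[OF deg_check t] v] .
    thus "vF (degF v) \<bullet> chi (cycE (0 # t)) = 2" using vF_chi[OF symF_degF P5_perms6[OF t], of v] by simp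
  qed
  thus ?thesis by (rule ham_all[OF _ assms(1)])
qed

lemma P_deg: "x \<in> P_TSP6 \<Longrightarrow> v < 6 \<Longrightarrow> vF (degF v) \<bullet> x = 2"
  using P_eq ham_deg by blast

lemma P_diff_D: "x \<in> P_TSP6 \<Longrightarrow> y \<in> P_TSP6 \<Longrightarrow> x - y \<in> Dset"
  unfolding Dset_def by (simp add: inner_diff_right P_deg)

lemma D_comb: "x \<in> Dset \<Longrightarrow> y \<in> Dset \<Longrightarrow> x - a *\<^sub>R y \<in> Dset"
  unfolding Dset_def by (simp add: inner_diff_right)

lemma interior_step:
  fixes p w :: "'a::euclidean_space"
  assumes p: "p \<in> lin_sys_set eqs ineqs" and w: "in_kernel eqs w"
    and strict: "\<forall>(c, \<delta>)\<in>set ineqs. c \<bullet> p < \<delta>"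
  shows "\<exists>\<epsilon>>0. p + \<epsilon> *\<^sub>R w \<in> lin_sys_set eqs ineqs"
proof -
  define S where "S = insert 1 ((\<lambda>(c, \<delta>). (\<delta> - c \<bullet> p) / (\<bar>c \<bullet> w\<bar> + 1)) ` set ineqs)"
  have fS: "finite S" "S \<noteq> {}" unfolding S_def by auto
  define \<epsilon> where "\<epsilon> = Min S"
  have pos: "\<forall>s\<in>S. s > 0" unfolding S_def using strict by (auto intro!: divide_pos_pos)
  have e0: "\<epsilon> > 0" unfolding \<epsilon>_def using fS pos by simp
  have "p + \<epsilon> *\<^sub>R w \<in> lin_sys_set eqs ineqs"
    unfolding lin_sys_set_def
  proof (intro CollectI conjI ballI)
    fix x assume x: "x \<in> set eqs"
    obtain a \<beta> where ab: "x = (a, \<beta>)" by (cases x)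
    have "a \<bullet> p = \<beta>" using p x ab unfolding lin_sys_set_def by auto
    moreover have "a \<bullet> w = 0" using w x ab unfolding in_kernel_def by auto
    ultimately show "case x of (a, \<beta>) \<Rightarrow> a \<bullet> (p + \<epsilon> *\<^sub>R w) = \<beta>" using ab by (simp add: inner_add_right)
  next
    fix x assume x: "x \<in> set ineqs"
    obtain c \<delta> where cd: "x = (c, \<delta>)" by (cases x)
    have lt: "c \<bullet> p < \<delta>" using strict x cd by auto
    have "\<epsilon> \<le> (\<delta> - c \<bullet> p) / (\<bar>c \<bullet> w\<bar> + 1)" unfolding \<epsilon>_def using fS x cd
      by (intro Min_le) (auto simp: S_def)
    hence "\<epsilon> * (\<bar>c \<bullet> w\<bar> + 1) \<le> \<delta> - c \<bullet> p"
      by (simp add: le_divide_eq add_pos_nonneg)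
    hence h: "\<epsilon> * \<bar>c \<bullet> w\<bar> + \<epsilon> \<le> \<delta> - c \<bullet> p" by (simp add: algebra_simps)
    have m: "\<epsilon> * (c \<bullet> w) \<le> \<epsilon> * \<bar>c \<bullet> w\<bar>" using e0 by (intro mult_left_mono) auto
    have "c \<bullet> p + \<epsilon> * (c \<bullet> w) \<le> \<delta>" using h m e0 by linarith
    thus "case x of (c, \<delta>) \<Rightarrow> c \<bullet> (p + \<epsilon> *\<^sub>R w) \<le> \<delta>" using cd by (simp add: inner_add_right)
  qed
  thus ?thesis using e0 by blast
qed

lemma avg_tight:
  fixes z :: "'b \<Rightarrow> 'a::real_inner"
  assumes "finite S" "S \<noteq> {}" "\<forall>T\<in>S. c \<bullet> z T \<le> \<delta>"
    "c \<bullet> ((1 / real (card S)) *\<^sub>R (\<Sum>T\<in>S. z T)) = \<delta>"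
  shows "\<forall>T\<in>S. c \<bullet> z T = \<delta>"
proof -
  have n: "real (card S) > 0" using assms(1,2) by (simp add: card_gt_0_iff)
  have "(\<Sum>T\<in>S. c \<bullet> z T) = real (card S) * \<delta>"
    using assms(4) n by (simp add: inner_sum_right field_simps)
  hence "(\<Sum>T\<in>S. \<delta> - c \<bullet> z T) = 0" by (simp add: sum_subtractf)
  hence "\<forall>T\<in>S. \<delta> - c \<bullet> z T = 0" using assms(1,3) by (subst sum_nonneg_eq_0_iff[symmetric]) auto
  thus ?thesis by simp
qed

lemma avg_in_P:
  assumes "finite S" "S \<noteq> {}" "\<forall>T\<in>S. ham_cycle6 T"
  shows "(1 / real (card S)) *\<^sub>R (\<Sum>T\<in>S. chi T) \<in> P_TSP6"
proof -
  have "(\<Sum>T\<in>S. (1 / real (card S)) *\<^sub>R chi T) \<in> P_TSP6"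
    unfolding P_TSP6_def
    by (rule convex_sum) (use assms in \<open>auto intro!: hull_inc simp: card_gt_0_iff\<close>)
  thus ?thesis by (simp add: scaleR_sum_right)
qed

section \<open>Consequences of minimality\<close>

lemma md_P: "minimal_description P_TSP6 eqs ineqs \<Longrightarrow> P_TSP6 = lin_sys_set eqs ineqs"
  unfolding minimal_description_def by simp

lemma md_row_not_all:
  assumes md: "minimal_description P_TSP6 eqs ineqs" and r: "(c, \<delta>) \<in> set ineqs"
  shows "\<exists>T. ham_cycle6 T \<and> c \<bullet> chi T \<noteq> \<delta>"
proof (rule ccontr)
  assume "\<not> ?thesis"
  hence all: "\<forall>T. ham_cycle6 T \<longrightarrow> c \<bullet> chi T = \<delta>" by blast
  have F: "{x \<in> P_TSP6. c \<bullet> x = \<delta>} facet_of P_TSP6" using md r unfolding minimal_description_def by blast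
  have "{x \<in> P_TSP6. c \<bullet> x = \<delta>} = P_TSP6" using P_eq[OF all] by blast
  thus False using F unfolding facet_of_def by simp
qed

lemma md_kernel_D:
  assumes md: "minimal_description P_TSP6 eqs ineqs" and y: "in_kernel eqs y"
  shows "y \<in> Dset"
proof -
  define S where "S = {T. ham_cycle6 T}"
  have fS: "finite S" "S \<noteq> {}" unfolding S_def using ham_C0 by auto
  define p where "p = (1 / real (card S)) *\<^sub>R (\<Sum>T\<in>S. chi T)"
  have pP: "p \<in> P_TSP6" unfolding p_def using avg_in_P[OF fS] unfolding S_def by simp
  hence pL: "p \<in> lin_sys_set eqs ineqs" using md_P[OF md] by simp
  have strict: "\<forall>(c, \<delta>)\<in>set ineqs. c \<bullet> p < \<delta>"
  proof (intro ballI, clarify)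
    fix c \<delta> assume r: "(c, \<delta>) \<in> set ineqs"
    have le: "c \<bullet> p \<le> \<delta>" using pL r unfolding lin_sys_set_def by auto
    have allle: "\<forall>T\<in>S. c \<bullet> chi T \<le> \<delta>" using r md_P[OF md] chi_in_P unfolding S_def lin_sys_set_def by fastforce
    show "c \<bullet> p < \<delta>"
    proof (rule ccontr)
      assume "\<not> c \<bullet> p < \<delta>"
      hence "c \<bullet> p = \<delta>" using le by simp
      hence "\<forall>T\<in>S. c \<bullet> chi T = \<delta>" using avg_tight[OF fS allle] unfolding p_def by blast
      thus False using md_row_not_all[OF md r] unfolding S_def by blast
    qed
  qed
  obtain \<epsilon> where e: "\<epsilon> > 0" "p + \<epsilon> *\<^sub>R y \<in> lin_sys_set eqs ineqs"
    using interior_step[OF pL y strict] by blast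
  have qP: "p + \<epsilon> *\<^sub>R y \<in> P_TSP6" using e md_P[OF md] by simp
  show ?thesis unfolding Dset_def
  proof (intro CollectI allI impI)
    fix v :: nat assume v: "v < 6"
    have "vF (degF v) \<bullet> (p + \<epsilon> *\<^sub>R y) = 2" "vF (degF v) \<bullet> p = 2" using P_deg qP pP v by auto
    hence "\<epsilon> * (vF (degF v) \<bullet> y) = 0" by (simp add: inner_add_right)
    thus "vF (degF v) \<bullet> y = 0" using e(1) by simp
  qed
qed

lemma good_row:
  assumes md: "minimal_description P_TSP6 eqs ineqs" and g: "good f \<phi>"
  shows "\<exists>i<length ineqs. (\<forall>x\<in>Dset. f \<bullet> x = 0 \<longrightarrow> fst (ineqs ! i) \<bullet> x = 0) \<and>
                          (\<forall>y\<in>Dset. fst (ineqs ! i) \<bullet> y = 0 \<longrightarrow> f \<bullet> y = 0)"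
proof -
  have valid: "\<forall>T. ham_cycle6 T \<longrightarrow> f \<bullet> chi T \<le> \<phi>" using g unfolding good_def by blast
  obtain T1 where T1: "ham_cycle6 T1" "f \<bullet> chi T1 < \<phi>" using g unfolding good_def by blast
  obtain T0 where T0: "ham_cycle6 T0" "f \<bullet> chi T0 = \<phi>"
    and sp: "\<forall>x\<in>Dset. f \<bullet> x = 0 \<longrightarrow> x \<in> span {chi T - chi T0 | T. ham_cycle6 T \<and> f \<bullet> chi T = \<phi>}"
    using g unfolding good_def by blast
  define S where "S = {T. ham_cycle6 T \<and> f \<bullet> chi T = \<phi>}"
  have fS: "finite S" "S \<noteq> {}" unfolding S_def using T0 by auto
  define p where "p = (1 / real (card S)) *\<^sub>R (\<Sum>T\<in>S. chi T)"
  have pP: "p \<in> P_TSP6" unfolding p_def by (rule avg_in_P[OF fS]) (simp add: S_def)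
  hence pL: "p \<in> lin_sys_set eqs ineqs" using md_P[OF md] by simp
  have fp: "f \<bullet> p = \<phi>"
  proof -
    have "f \<bullet> p = (1 / real (card S)) * (\<Sum>T\<in>S. f \<bullet> chi T)" unfolding p_def by (simp add: inner_sum_right)
    also have "(\<Sum>T\<in>S. f \<bullet> chi T) = real (card S) * \<phi>" unfolding S_def by simp
    finally show ?thesis using fS by (simp add: card_gt_0_iff)
  qed
  have "\<exists>(c, \<delta>)\<in>set ineqs. c \<bullet> p = \<delta>"
  proof (rule ccontr)
    assume "\<not> ?thesis"
    hence strict: "\<forall>(c, \<delta>)\<in>set ineqs. c \<bullet> p < \<delta>" using pL unfolding lin_sys_set_def by fastforce
    have T1P: "chi T1 \<in> lin_sys_set eqs ineqs" using chi_in_P[OF T1(1)] md_P[OF md] by simp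
    have ker: "in_kernel eqs (p - chi T1)"
      using pL T1P unfolding in_kernel_def lin_sys_set_def by (auto simp: inner_diff_right)
    obtain \<epsilon> where e: "\<epsilon> > 0" "p + \<epsilon> *\<^sub>R (p - chi T1) \<in> lin_sys_set eqs ineqs"
      using interior_step[OF pL ker strict] by blast
    hence "f \<bullet> (p + \<epsilon> *\<^sub>R (p - chi T1)) \<le> \<phi>" using P_le[OF valid] md_P[OF md] by simp
    moreover have "f \<bullet> (p + \<epsilon> *\<^sub>R (p - chi T1)) = \<phi> + \<epsilon> * (\<phi> - f \<bullet> chi T1)"
      using fp by (simp add: inner_add_right inner_diff_right)
    moreover have "\<epsilon> * (\<phi> - f \<bullet> chi T1) > 0" using e(1) T1(2) by simp
    ultimately show False by simp
  qed
  then obtain c \<delta> where r: "(c, \<delta>) \<in> set ineqs" "c \<bullet> p = \<delta>" by blast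
  then obtain i where i: "i < length ineqs" "ineqs ! i = (c, \<delta>)" by (metis in_set_conv_nth)
  have allle: "\<forall>T\<in>S. c \<bullet> chi T \<le> \<delta>" using r md_P[OF md] chi_in_P unfolding S_def lin_sys_set_def by fastforce
  have tight: "\<forall>T\<in>S. c \<bullet> chi T = \<delta>" using avg_tight[OF fS allle] r(2) unfolding p_def by blast
  have T0S: "T0 \<in> S" unfolding S_def using T0 by simp
  have part1: "\<forall>x\<in>Dset. f \<bullet> x = 0 \<longrightarrow> c \<bullet> x = 0"
  proof (intro ballI impI)
    fix x assume x: "x \<in> Dset" "f \<bullet> x = 0"
    have "{chi T - chi T0 | T. ham_cycle6 T \<and> f \<bullet> chi T = \<phi>} \<subseteq> {x. c \<bullet> x = 0}"
      using tight T0S unfolding S_def by (auto simp: inner_diff_right)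
    hence "span {chi T - chi T0 | T. ham_cycle6 T \<and> f \<bullet> chi T = \<phi>} \<subseteq> {x. c \<bullet> x = 0}"
      by (rule span_minimal) (rule subspace_hyperplane)
    thus "c \<bullet> x = 0" using sp x by blast
  qed
  have part2: "\<forall>y\<in>Dset. c \<bullet> y = 0 \<longrightarrow> f \<bullet> y = 0"
  proof (intro ballI impI, rule ccontr)
    fix y assume y: "y \<in> Dset" "c \<bullet> y = 0" "f \<bullet> y \<noteq> 0"
    have "\<forall>T. ham_cycle6 T \<longrightarrow> c \<bullet> chi T = \<delta>"
    proof (intro allI impI)
      fix T assume T: "ham_cycle6 T"
      define d where "d = chi T - chi T0"
      have dD: "d \<in> Dset" unfolding d_def by (rule P_diff_D[OF chi_in_P[OF T] chi_in_P[OF T0(1)]])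
      define x where "x = d - ((f \<bullet> d) / (f \<bullet> y)) *\<^sub>R y"
      have xD: "x \<in> Dset" unfolding x_def by (rule D_comb[OF dD y(1)])
      have "f \<bullet> x = 0" unfolding x_def using y(3) by (simp add: inner_diff_right)
      hence "c \<bullet> x = 0" using part1 xD by blast
      hence "c \<bullet> d = 0" unfolding x_def using y(2) by (simp add: inner_diff_right)
      thus "c \<bullet> chi T = \<delta>" unfolding d_def using tight T0S by (simp add: inner_diff_right)
    qed
    thus False using md_row_not_all[OF md r(1)] by blast
  qed
  show ?thesis using i part1 part2 by (intro exI[of _ i]) simp
qed

lemma circuit_from_goods:
  assumes md: "minimal_description P_TSP6 eqs ineqs"
    and T1: "ham_cycle6 T1" and T2: "ham_cycle6 T2" and gdef: "g = chi T2 - chi T1" and g0: "g \<noteq> 0"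
    and G: "\<forall>(f, \<phi>)\<in>set G. good f \<phi> \<and> f \<bullet> g = 0"
    and pin: "\<forall>y\<in>Dset. (\<forall>(f, \<phi>)\<in>set G. f \<bullet> y = 0) \<longrightarrow> (\<exists>s. y = s *\<^sub>R g)"
  shows "is_circuit eqs ineqs g"
proof -
  have P1: "chi T1 \<in> lin_sys_set eqs ineqs" "chi T2 \<in> lin_sys_set eqs ineqs"
    using chi_in_P[OF T1] chi_in_P[OF T2] md_P[OF md] by auto
  have gK: "in_kernel eqs g" using P1 unfolding gdef in_kernel_def lin_sys_set_def
    by (auto simp: inner_diff_right)
  have gD: "g \<in> Dset" unfolding gdef by (rule P_diff_D[OF chi_in_P[OF T2] chi_in_P[OF T1]])
  have "\<not> (\<exists>y. y \<noteq> 0 \<and> in_kernel eqs y \<and> ineq_supp ineqs y \<subset> ineq_supp ineqs g)"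
  proof
    assume "\<exists>y. y \<noteq> 0 \<and> in_kernel eqs y \<and> ineq_supp ineqs y \<subset> ineq_supp ineqs g"
    then obtain y where y: "y \<noteq> 0" "in_kernel eqs y" "ineq_supp ineqs y \<subset> ineq_supp ineqs g" by blast
    have yD: "y \<in> Dset" by (rule md_kernel_D[OF md y(2)])
    have "\<forall>(f, \<phi>)\<in>set G. f \<bullet> y = 0"
    proof (intro ballI, clarify)
      fix f \<phi> assume fG: "(f, \<phi>) \<in> set G"
      have gf: "good f \<phi>" "f \<bullet> g = 0" using G fG by auto
      obtain i where i: "i < length ineqs" "\<forall>x\<in>Dset. f \<bullet> x = 0 \<longrightarrow> fst (ineqs ! i) \<bullet> x = 0"
        "\<forall>y\<in>Dset. fst (ineqs ! i) \<bullet> y = 0 \<longrightarrow> f \<bullet> y = 0"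
        using good_row[OF md gf(1)] by blast
      have "fst (ineqs ! i) \<bullet> g = 0" using i(2) gD gf(2) by blast
      hence "i \<notin> ineq_supp ineqs g" unfolding ineq_supp_def by simp
      hence "i \<notin> ineq_supp ineqs y" using y(3) by blast
      hence "fst (ineqs ! i) \<bullet> y = 0" using i(1) unfolding ineq_supp_def by simp
      thus "f \<bullet> y = 0" using i(3) yD by blast
    qed
    then obtain s where s: "y = s *\<^sub>R g" using pin yD by blast
    have "s \<noteq> 0" using y(1) s by auto
    hence "ineq_supp ineqs y = ineq_supp ineqs g" unfolding s ineq_supp_def by simp
    thus False using y(3) by simp
  qed
  thus ?thesis unfolding is_circuit_def using g0 gK by simp
qed



section \<open>Linear certificates\<close>

definition sl :: "(nat \<Rightarrow> int) \<Rightarrow> nat \<Rightarrow> int" where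
  "sl f n = sum_list (map f [0..<n])"

lemma sl_sum: "sl f n = (\<Sum>k<n. f k)"
  unfolding sl_def interv_sum_list_conv_sum_set_nat set_upt atLeast0LessThan ..

definition lincheck :: "int list list \<Rightarrow> (int list \<times> int list) list \<Rightarrow> int \<Rightarrow> int list list \<Rightarrow> bool" where
  "lincheck rws tg d lam \<longleftrightarrow> d \<noteq> 0 \<and>
     list_all (\<lambda>e. list_all (\<lambda>e'. d * (if e' = e then 1 else 0) - sl (\<lambda>k. snd (tg ! k) ! e * fst (tg ! k) ! e') (length tg)
        = sl (\<lambda>j. lam ! e ! j * rws ! j ! e') (length rws)) [0..<15]) [0..<15]"

lemma lincheck_sound:
  assumes c: "lincheck rws tg d lam" and r: "\<forall>j<length rws. lf (rws ! j) x = 0" and e: "e < 15"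
  shows "of_int d * x $ ix e = (\<Sum>k<length tg. of_int (snd (tg ! k) ! e) * lf (fst (tg ! k)) x)"
proof -
  have h: "\<And>e'. e' < 15 \<Longrightarrow> d * (if e' = e then 1 else 0) - (\<Sum>k<length tg. snd (tg ! k) ! e * fst (tg ! k) ! e')
        = (\<Sum>j<length rws. lam ! e ! j * rws ! j ! e')"
    using c e unfolding lincheck_def list_all_iff sl_sum by auto
  define X where "X e' = x $ ix e'" for e'
  have "(\<Sum>e'<15. of_int (d * (if e' = e then 1 else 0) - (\<Sum>k<length tg. snd (tg ! k) ! e * fst (tg ! k) ! e')) * X e')
      = (\<Sum>e'<15. of_int (\<Sum>j<length rws. lam ! e ! j * rws ! j ! e') * X e')"
    using h by (intro sum.cong) auto
  also have "\<dots> = (\<Sum>j<length rws. of_int (lam ! e ! j) * lf (rws ! j) x)"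
    unfolding lf_def X_def by (simp add: sum_distrib_left sum_distrib_right mult.assoc sum.swap[of _ "{..<15}"])
  also have "\<dots> = 0" using r by simp
  finally have z: "(\<Sum>e'<15. of_int (d * (if e' = e then 1 else 0) - (\<Sum>k<length tg. snd (tg ! k) ! e * fst (tg ! k) ! e')) * X e') = 0" .
  have "(\<Sum>e'<15. of_int (d * (if e' = e then 1 else 0) - (\<Sum>k<length tg. snd (tg ! k) ! e * fst (tg ! k) ! e')) * X e')
     = (\<Sum>e'<15. of_int d * (if e' = e then X e' else 0) - (\<Sum>k<length tg. of_int (snd (tg ! k) ! e) * (of_int (fst (tg ! k) ! e') * X e')))"
  proof (rule sum.cong[OF refl])
    fix e' :: nat
    show "of_int (d * (if e' = e then 1 else 0) - (\<Sum>k<length tg. snd (tg ! k) ! e * fst (tg ! k) ! e')) * X e'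
      = of_int d * (if e' = e then X e' else 0) - (\<Sum>k<length tg. of_int (snd (tg ! k) ! e) * (of_int (fst (tg ! k) ! e') * X e'))"
      by (cases "e' = e") (simp_all add: algebra_simps sum_distrib_right sum_distrib_left)
  qed
  also have "\<dots> = (\<Sum>e'<15. of_int d * (if e' = e then X e' else 0)) - (\<Sum>e'<15. \<Sum>k<length tg. of_int (snd (tg ! k) ! e) * (of_int (fst (tg ! k) ! e') * X e'))"
    by (rule sum_subtractf)
  also have "(\<Sum>e'<15. of_int d * (if e' = e then X e' else 0)) = of_int d * X e"
    using e by (simp add: sum_distrib_left[symmetric] if_distrib sum.delta cong: if_cong)
  also have "(\<Sum>e'<15. \<Sum>k<length tg. of_int (snd (tg ! k) ! e) * (of_int (fst (tg ! k) ! e') * X e'))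
     = (\<Sum>k<length tg. of_int (snd (tg ! k) ! e) * lf (fst (tg ! k)) x)"
    unfolding lf_def X_def by (simp add: sum_distrib_left sum.swap[of _ "{..<15}"])
  finally show ?thesis using z unfolding X_def by simp
qed

definition nnF :: "nat \<Rightarrow> nat \<Rightarrow> int" where
  "nnF i j = (if (i = 0 \<and> j = 1) \<or> (i = 1 \<and> j = 0) then -1 else 0)"
definition stF :: "nat \<Rightarrow> nat \<Rightarrow> int" where
  "stF i j = (if i < 3 \<and> j < 3 \<and> i \<noteq> j then 1 else 0)"
definition combF :: "nat \<Rightarrow> nat \<Rightarrow> int" where
  "combF i j = stF i j + (if (i, j) \<in> set [(0,3),(3,0),(1,4),(4,1),(2,5),(5,2)] then 1 else 0)"
definition FK :: "nat \<Rightarrow> nat \<Rightarrow> nat \<Rightarrow> int" where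
  "FK k = (if k = 0 then nnF else if k = 1 then stF else combF)"
definition PHI :: "nat \<Rightarrow> int" where
  "PHI k = (if k = 0 then 0 else if k = 1 then 2 else 4)"

lemma symF_FK: "symF (FK k)"
  unfolding symF_def FK_def nnF_def stF_def combF_def by auto

definition degrows :: "int list list" where
  "degrows = map (\<lambda>v. coefs (degF v)) [0..<6]"

lemma degrows_zero: "x \<in> Dset \<Longrightarrow> \<forall>j<length degrows. lf (degrows ! j) x = 0"
  unfolding degrows_def Dset_def by (simp add: vF_inner[symmetric])

definition idiff :: "int list \<Rightarrow> int list \<Rightarrow> int list" where
  "idiff a b = map (\<lambda>(x, y). x - y) (zip a b)"

lemma length_chi_int: "length (chi_int vs) = 15" by (simp add: chi_int_def length_EL)

lemma idiff_nth: "length a = 15 \<Longrightarrow> length b = 15 \<Longrightarrow> e < 15 \<Longrightarrow> idiff a b ! e = a ! e - b ! e"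
  by (simp add: idiff_def)

lemma chi_diff_ix: "e < 15 \<Longrightarrow> (chi (cycE vs) - chi (cycE ws)) $ ix e = of_int (idiff (chi_int vs) (chi_int ws) ! e)"
  by (simp add: idiff_nth length_chi_int chi_ix)

definition kindcheck :: "nat \<Rightarrow> nat list \<Rightarrow> nat list \<Rightarrow> nat list list \<Rightarrow> int list list \<Rightarrow> int \<Rightarrow> int list list \<Rightarrow> bool" where
  "kindcheck k t0 tn ts as d lam \<longleftrightarrow>
     list_all (\<lambda>t. cval (FK k) (0 # t) \<le> PHI k) P5 \<and>
     tn \<in> set P5 \<and> cval (FK k) (0 # tn) < PHI k \<and>
     t0 \<in> set P5 \<and> cval (FK k) (0 # t0) = PHI k \<and>
     list_all (\<lambda>t. t \<in> set P5 \<and> cval (FK k) (0 # t) = PHI k) ts \<and> length as = length ts \<and>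
     lincheck (degrows @ [coefs (FK k)]) (zip as (map (\<lambda>t. idiff (chi_int (0 # t)) (chi_int (0 # t0))) ts)) d lam"

lemma kindcheck_good:
  assumes kc: "kindcheck k t0 tn ts as d lam"
  shows "good (vF (FK k)) (of_int (PHI k))"
proof -
  let ?f = "vF (FK k)"
  have val: "\<And>t. t \<in> set P5 \<Longrightarrow> ?f \<bullet> chi (cycE (0 # t)) = of_int (cval (FK k) (0 # t))"
    by (rule vF_chi[OF symF_FK P5_perms6])
  have c1: "\<forall>T. ham_cycle6 T \<longrightarrow> ?f \<bullet> chi T \<le> of_int (PHI k)"
  proof (intro allI impI)
    fix T assume T: "ham_cycle6 T"
    have "\<forall>t\<in>set P5. ?f \<bullet> chi (cycE (0 # t)) \<le> of_int (PHI k)"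
      using kc val unfolding kindcheck_def list_all_iff by simp
    thus "?f \<bullet> chi T \<le> of_int (PHI k)" by (rule ham_all[OF _ T])
  qed
  have hamt: "\<And>t. t \<in> set P5 \<Longrightarrow> ham_cycle6 (cycE (0 # t))" using P5_perms6 ham_iff by blast
  have c2: "\<exists>T. ham_cycle6 T \<and> ?f \<bullet> chi T < of_int (PHI k)"
    using kc hamt[of tn] val[of tn] unfolding kindcheck_def by (intro exI[of _ "cycE (0 # tn)"]) simp
  define T0 where "T0 = cycE (0 # t0)"
  have t0: "t0 \<in> set P5" "cval (FK k) (0 # t0) = PHI k" using kc unfolding kindcheck_def by auto
  have T0h: "ham_cycle6 T0" "?f \<bullet> chi T0 = of_int (PHI k)" unfolding T0_def using hamt[OF t0(1)] val[OF t0(1)] t0(2) by auto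
  have ts: "\<forall>t\<in>set ts. t \<in> set P5 \<and> cval (FK k) (0 # t) = PHI k" and la: "length as = length ts"
    and lc: "lincheck (degrows @ [coefs (FK k)]) (zip as (map (\<lambda>t. idiff (chi_int (0 # t)) (chi_int (0 # t0))) ts)) d lam"
    using kc unfolding kindcheck_def list_all_iff by auto
  have d0: "d \<noteq> 0" using lc unfolding lincheck_def by simp
  have c3: "\<forall>x\<in>Dset. ?f \<bullet> x = 0 \<longrightarrow> x \<in> span {chi T - chi T0 | T. ham_cycle6 T \<and> ?f \<bullet> chi T = of_int (PHI k)}"
  proof (intro ballI impI)
    fix x assume x: "x \<in> Dset" "?f \<bullet> x = 0"
    let ?rws = "degrows @ [coefs (FK k)]"
    let ?tg = "zip as (map (\<lambda>t. idiff (chi_int (0 # t)) (chi_int (0 # t0))) ts)"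
    have rz: "\<forall>j<length ?rws. lf (?rws ! j) x = 0"
    proof (intro allI impI)
      fix j assume j: "j < length ?rws"
      show "lf (?rws ! j) x = 0"
      proof (cases "j < length degrows")
        case True thus ?thesis using degrows_zero[OF x(1)] by (simp add: nth_append)
      next
        case False
        hence "j = length degrows" using j by simp
        thus ?thesis using x(2) by (simp add: nth_append vF_inner)
      qed
    qed
    define v where "v k' = chi (cycE (0 # ts ! k')) - chi T0" for k'
    define y where "y = (\<Sum>k'<length ts. (lf (as ! k') x / of_int d) *\<^sub>R v k')"
    have "x = y"
    proof (rule vec_eq_ix)
      fix e :: nat assume e: "e < 15"
      have "of_int d * x $ ix e = (\<Sum>k'<length ?tg. of_int (snd (?tg ! k') ! e) * lf (fst (?tg ! k')) x)"
        by (rule lincheck_sound[OF lc rz e])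
      also have "\<dots> = (\<Sum>k'<length ts. v k' $ ix e * lf (as ! k') x)"
        using la e unfolding v_def T0_def by (intro sum.cong) (auto simp: idiff_nth length_chi_int chi_ix)
      finally have "of_int d * x $ ix e = (\<Sum>k'<length ts. v k' $ ix e * lf (as ! k') x)" .
      thus "x $ ix e = y $ ix e" unfolding y_def using d0
        by (simp add: sum_divide_distrib[symmetric] field_simps)
    qed
    moreover have "y \<in> span {chi T - chi T0 | T. ham_cycle6 T \<and> ?f \<bullet> chi T = of_int (PHI k)}"
      unfolding y_def
    proof (intro span_sum span_mul span_base)
      fix k' assume "k' \<in> {..<length ts}"
      hence "ts ! k' \<in> set ts" by simp
      hence "ts ! k' \<in> set P5" "cval (FK k) (0 # ts ! k') = PHI k" using ts by auto
      thus "v k' \<in> {chi T - chi T0 | T. ham_cycle6 T \<and> ?f \<bullet> chi T = of_int (PHI k)}"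
        unfolding v_def using hamt val by fastforce
    qed
    ultimately show "x \<in> span {chi T - chi T0 | T. ham_cycle6 T \<and> ?f \<bullet> chi T = of_int (PHI k)}" by simp
  qed
  show ?thesis unfolding good_def using c1 c2 T0h c3 by blast
qed



definition lp :: "nat list \<Rightarrow> nat \<Rightarrow> nat" where "lp \<rho> i = (if i < 6 then \<rho> ! i else i)"

definition permL :: "nat list \<Rightarrow> bool" where
  "permL \<rho> \<longleftrightarrow> length \<rho> = 6 \<and> distinct \<rho> \<and> set \<rho> = set [0..<6]"

lemma permL_perms6: "permL \<rho> \<longleftrightarrow> \<rho> \<in> perms6"
  unfolding permL_def perms6_def by (simp add: atLeast0LessThan)

lemma permL_permutes: assumes "permL \<rho>" shows "lp \<rho> permutes {..<6}"
proof (rule bij_imp_permutes)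
  have r: "length \<rho> = 6" "distinct \<rho>" "set \<rho> = {..<6}" using assms permL_perms6 unfolding perms6_def by auto
  show "bij_betw (lp \<rho>) {..<6} {..<6}"
  proof (rule bij_betw_imageI)
    show "inj_on (lp \<rho>) {..<6}" unfolding lp_def inj_on_def using r by (simp add: nth_eq_iff_index_eq)
    have "lp \<rho> ` {..<6} = (\<lambda>i. \<rho> ! i) ` {..<length \<rho>}" using r unfolding lp_def by auto
    also have "\<dots> = set \<rho>" by (auto simp: in_set_conv_nth)
    finally show "lp \<rho> ` {..<6} = {..<6}" using r by simp
  qed
  show "\<And>x. x \<notin> {..<6} \<Longrightarrow> lp \<rho> x = x" unfolding lp_def by simp
qed

definition sameC :: "nat list \<Rightarrow> nat list \<Rightarrow> bool" where
  "sameC vs ws \<longleftrightarrow> list_all (\<lambda>(i, j). cycedge vs i j = cycedge ws i j) EL"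

lemma sameC_eq: assumes "sameC vs ws" shows "cycE vs = cycE ws"
proof (rule set_eqI)
  fix e obtain i j where ij: "i < j" "j < 6" "e = ab i j" using edge_ex by blast
  have "(i, j) \<in> set EL" using EL_complete ij by simp
  hence "cycedge vs i j = cycedge ws i j" using assms unfolding sameC_def list_all_iff by auto
  thus "e \<in> cycE vs \<longleftrightarrow> e \<in> cycE ws" using ij ab_in_cycE by simp
qed

definition C0L :: "nat list" where "C0L = [0,1,2,3,4,5]"

lemma C0L_perms6: "C0L \<in> perms6"
proof -
  have "permL C0L" unfolding permL_def C0L_def by code_simp
  thus ?thesis using permL_perms6 by simp
qed

lemma emap_comp: assumes "\<sigma> permutes {..<6}" "\<rho> permutes {..<6}"
  shows "emap (\<rho> \<circ> \<sigma>) e = emap \<rho> (emap \<sigma> e)"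
proof -
  obtain i j where ij: "i < j" "j < 6" "e = ab i j" using edge_ex by blast
  have c: "(\<rho> \<circ> \<sigma>) permutes {..<6}" using permutes_compose[OF assms(1,2)] .
  have "\<sigma> i < 6" "\<sigma> j < 6" "\<sigma> i \<noteq> \<sigma> j" using ij perm6_lt[OF assms(1)] perm6_neq[OF assms(1)] by auto
  thus ?thesis using ij emap_ab[OF c] emap_ab[OF assms(1)] emap_ab[OF assms(2)] by simp
qed

lemma chi_inj: assumes "chi T1 = chi T2" shows "T1 = T2"
proof (rule set_eqI)
  fix e have "chi T1 $ e = chi T2 $ e" using assms by simp
  thus "e \<in> T1 \<longleftrightarrow> e \<in> T2" unfolding chi_def by (auto split: if_splits)
qed

section \<open>Representative certificates\<close>

definition dunit :: "int \<Rightarrow> nat \<Rightarrow> int list" where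
  "dunit d k = map (\<lambda>e. if e = k then d else 0) [0..<15]"

lemma lf_dunit: assumes "k < 15" shows "lf (dunit d k) x = of_int d * x $ ix k"
proof -
  have "lf (dunit d k) x = (\<Sum>e<15. if e = k then of_int d * x $ ix k else 0)"
    unfolding lf_def by (intro sum.cong) (auto simp: dunit_def)
  thus ?thesis using assms by simp
qed

definition facF :: "nat \<Rightarrow> nat list \<Rightarrow> nat \<Rightarrow> nat \<Rightarrow> int" where
  "facF k \<tau> i j = FK k (lp \<tau> i) (lp \<tau> j)"

definition repcheck :: "nat list \<Rightarrow> (nat \<times> nat list) list \<Rightarrow> nat \<Rightarrow> int \<Rightarrow> int list list \<Rightarrow> bool" where
  "repcheck rep J ks d lam \<longleftrightarrow> permL rep \<and> ks < 15 \<and>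
     list_all (\<lambda>(k, \<tau>). permL \<tau> \<and> k < 3 \<and> cval (facF k \<tau>) rep = cval (facF k \<tau>) C0L) J \<and>
     lincheck (degrows @ map (\<lambda>(k, \<tau>). coefs (facF k \<tau>)) J)
       [(dunit d ks, idiff (chi_int rep) (chi_int C0L))] d lam"

definition goodlist :: "(nat \<times> nat list) list \<Rightarrow> ((real ^ edge6) \<times> real) list" where
  "goodlist J = map (\<lambda>(k, \<tau>). (vF (facF k \<tau>), of_int (PHI k))) J"

lemma symF_facF: "symF (facF k \<tau>)" using symF_FK unfolding symF_def facF_def by simp

lemma repcheck_sound:
  assumes rc: "repcheck rep J ks d lam" and kinds: "\<forall>k<3. good (vF (FK k)) (of_int (PHI k))"
  shows "(\<forall>(f, \<phi>)\<in>set (goodlist J). good f \<phi> \<and> f \<bullet> (chi (cycE rep) - chi (cycE C0L)) = 0) \<and>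
         (\<forall>y\<in>Dset. (\<forall>(f, \<phi>)\<in>set (goodlist J). f \<bullet> y = 0) \<longrightarrow> (\<exists>s. y = s *\<^sub>R (chi (cycE rep) - chi (cycE C0L))))"
proof -
  let ?g = "chi (cycE rep) - chi (cycE C0L)"
  have rp: "rep \<in> perms6" using rc permL_perms6 unfolding repcheck_def by simp
  have J: "\<forall>(k, \<tau>)\<in>set J. permL \<tau> \<and> k < 3 \<and> cval (facF k \<tau>) rep = cval (facF k \<tau>) C0L"
    using rc unfolding repcheck_def list_all_iff by simp
  have part1: "\<forall>(f, \<phi>)\<in>set (goodlist J). good f \<phi> \<and> f \<bullet> ?g = 0"
  proof (intro ballI, clarify)
    fix f \<phi> assume "(f, \<phi>) \<in> set (goodlist J)"
    then obtain k \<tau> where kt: "(k, \<tau>) \<in> set J" "f = vF (facF k \<tau>)" "\<phi> = of_int (PHI k)"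
      unfolding goodlist_def by auto
    have h: "permL \<tau>" "k < 3" "cval (facF k \<tau>) rep = cval (facF k \<tau>) C0L" using J kt(1) by auto
    have "pullv (lp \<tau>) (vF (FK k)) = vF (facF k \<tau>)"
      unfolding facF_def by (rule pullv_vF[OF permL_permutes[OF h(1)] symF_FK])
    hence "good f \<phi>" using good_pullv[OF permL_permutes[OF h(1)]] kinds h(2) kt by metis
    moreover have "f \<bullet> ?g = 0" unfolding kt(2) inner_diff_right
      using vF_chi[OF symF_facF rp] vF_chi[OF symF_facF C0L_perms6] h(3) by simp
    ultimately show "good f \<phi> \<and> f \<bullet> ?g = 0" by simp
  qed
  have part2: "\<forall>y\<in>Dset. (\<forall>(f, \<phi>)\<in>set (goodlist J). f \<bullet> y = 0) \<longrightarrow> (\<exists>s. y = s *\<^sub>R ?g)"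
  proof (intro ballI impI)
    fix y assume y: "y \<in> Dset" "\<forall>(f, \<phi>)\<in>set (goodlist J). f \<bullet> y = 0"
    let ?rws = "degrows @ map (\<lambda>(k, \<tau>). coefs (facF k \<tau>)) J"
    have lc: "lincheck ?rws [(dunit d ks, idiff (chi_int rep) (chi_int C0L))] d lam" and ks: "ks < 15"
      using rc unfolding repcheck_def by auto
    have d0: "d \<noteq> 0" using lc unfolding lincheck_def by simp
    have rz: "\<forall>j<length ?rws. lf (?rws ! j) y = 0"
    proof (intro allI impI)
      fix j assume j: "j < length ?rws"
      show "lf (?rws ! j) y = 0"
      proof (cases "j < length degrows")
        case True thus ?thesis using degrows_zero[OF y(1)] by (simp add: nth_append)
      next
        case False
        define j' where "j' = j - length degrows"
        have j': "j' < length J" "?rws ! j = coefs (facF (fst (J ! j')) (snd (J ! j')))"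
          using j False unfolding j'_def by (auto simp: nth_append split: prod.splits)
        have "(vF (facF (fst (J ! j')) (snd (J ! j'))), of_int (PHI (fst (J ! j')))) \<in> set (goodlist J)"
          unfolding goodlist_def using j'(1) by (auto simp: set_conv_nth split: prod.splits intro!: exI[of _ j'])
        hence "vF (facF (fst (J ! j')) (snd (J ! j'))) \<bullet> y = 0" using y(2) by fastforce
        thus ?thesis using j'(2) by (simp add: vF_inner)
      qed
    qed
    have "y = (y $ ix ks) *\<^sub>R ?g"
    proof (rule vec_eq_ix)
      fix e :: nat assume e: "e < 15"
      have "of_int d * y $ ix e = of_int (idiff (chi_int rep) (chi_int C0L) ! e) * lf (dunit d ks) y"
        using lincheck_sound[OF lc rz e] by simp
      also have "\<dots> = of_int d * (?g $ ix e * y $ ix ks)"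
        using e ks by (simp add: lf_dunit idiff_nth length_chi_int chi_ix)
      finally show "y $ ix e = ((y $ ix ks) *\<^sub>R ?g) $ ix e" using d0 by simp
    qed
    thus "\<exists>s. y = s *\<^sub>R ?g" by blast
  qed
  show ?thesis using part1 part2 by blast
qed



definition REPS :: "nat list list" where
  "REPS = [[0,1,2,3,5,4],[0,1,2,4,5,3],[0,1,2,5,4,3],[0,1,3,2,5,4],[0,1,3,5,2,4],[0,1,3,5,4,2],[0,1,4,2,5,3],[0,1,4,3,5,2],[0,1,4,5,2,3],[0,1,5,3,4,2],[0,2,4,1,5,3]]"

definition REPDATA :: "((nat \<times> nat list) list \<times> nat \<times> int \<times> int list list) list" where
  "REPDATA = [([(0,[0,1,2,3,4,5]),(0,[0,2,1,3,4,5]),(0,[0,2,3,1,4,5]),(0,[2,0,1,3,4,5]),(0,[2,0,3,1,4,5]),(0,[2,0,3,4,1,5]),(0,[2,3,0,1,4,5]),(0,[2,3,0,4,1,5])],3,2,[[0,0,0,0,0,0,-2,0,0,0,0,0,0,0],[0,0,0,0,0,0,0,-2,0,0,0,0,0,0],[0,0,0,0,0,0,0,0,-2,0,0,0,0,0],[0,0,0,0,0,0,0,0,0,0,0,0,0,0],[2,0,0,0,0,0,2,2,2,0,0,0,0,0],[0,0,0,0,0,0,0,0,0,-2,0,0,0,0],[0,0,0,0,0,0,0,0,0,0,-2,0,0,0],[0,0,0,0,0,0,0,0,0,0,0,-2,0,0],[0,2,0,0,0,0,2,0,0,2,2,2,0,0],[0,0,0,0,0,0,0,0,0,0,0,0,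-2,0],[0,0,0,0,0,0,0,0,0,0,0,0,0,-2],[0,0,2,0,0,0,0,2,0,2,0,0,2,2],[1,1,1,1,1,-1,2,2,2,2,2,2,2,2],[-1,-1,-1,1,-1,1,-2,-2,0,-2,0,-2,0,-2],[-1,-1,-1,-1,1,1,-2,-2,-2,-2,-2,0,-2,0]]),([(0,[0,1,2,3,4,5]),(0,[0,2,1,3,4,5]),(0,[0,2,3,4,1,5]),(0,[2,0,1,3,4,5]),(0,[2,0,3,1,4,5]),(0,[2,0,3,4,1,5]),(0,[2,3,0,4,5,1]),(0,[2,3,4,5,0,1])],2,2,[[0,0,0,0,0,0,-2,0,0,0,0,0,0,0],[0,0,0,0,0,0,0,-2,0,0,0,0,0,0],[0,0,0,0,0,0,0,0,0,0,0,0,0,0],[0,0,0,0,0,0,0,0,-2,0,0,0,0,0],[2,0,0,0,0,0,2,2,2,0,0,0,0,0],[0,0,0,0,0,0,0,0,0,-2,0,0,0,0],[0,0,0,0,0,0,0,0,0,0,-2,0,0,0],[0,0,0,0,0,0,0,0,0,0,0,-2,0,0],[0,2,0,0,0,0,2,0,0,2,2,2,0,0],[1,1,1,1,-1,-1,2,2,0,2,2,0,0,-2],[-1,-1,1,-1,1,1,-2,0,0,0,-2,0,2,2],[0,0,0,0,0,0,0,0,0,0,0,0,-2,0],[1,1,-1,1,1,-1,2,0,2,0,2,2,-2,0],[-2,-2,0,0,0,2,-4,-2,-2,-2,-2,-2,2,2],[0,0,0,0,0,0,0,0,0,0,0,0,0,-2]]),([(0,[0,1,2,3,4,5]),(0,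[0,2,1,3,4,5]),(0,[0,2,3,4,1,5]),(0,[2,0,1,3,4,5]),(0,[2,0,3,1,4,5]),(0,[2,0,3,4,1,5]),(0,[2,3,0,4,1,5]),(0,[2,3,4,0,1,5])],2,2,[[0,0,0,0,0,0,-2,0,0,0,0,0,0,0],[0,0,0,0,0,0,0,-2,0,0,0,0,0,0],[0,0,0,0,0,0,0,0,0,0,0,0,0,0],[0,0,0,0,0,0,0,0,-2,0,0,0,0,0],[2,0,0,0,0,0,2,2,2,0,0,0,0,0],[0,0,0,0,0,0,0,0,0,-2,0,0,0,0],[0,0,0,0,0,0,0,0,0,0,-2,0,0,0],[0,0,0,0,0,0,0,0,0,0,0,-2,0,0],[0,2,0,0,0,0,2,0,0,2,2,2,0,0],[1,1,1,1,1,-1,2,2,2,2,2,2,2,2],[0,0,0,0,0,0,0,0,0,0,0,0,-2,0],[-1,-1,1,-1,-1,1,-2,0,-2,0,-2,-2,0,-2],[0,0,0,0,0,0,0,0,0,0,0,0,0,-2],[-1,-1,-1,1,-1,1,-2,-2,-2,-2,0,-2,-2,0],[0,0,0,0,2,0,0,0,2,0,0,2,2,2]]),([(0,[0,1,2,3,4,5]),(0,[0,2,1,3,4,5]),(0,[0,2,3,1,4,5]),(0,[2,0,3,4,1,5]),(0,[2,0,3,4,5,1]),(0,[2,3,0,1,4,5]),(0,[2,3,0,4,1,5]),(0,[2,3,4,0,5,1])],3,2,[[0,0,0,0,0,0,-2,0,0,0,0,0,0,0],[0,0,0,0,0,0,0,-2,0,0,0,0,0,0],[0,0,0,0,0,0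,0,0,-2,0,0,0,0,0],[0,0,0,0,0,0,0,0,0,0,0,0,0,0],[2,0,0,0,0,0,2,2,2,0,0,0,0,0],[1,1,1,-1,1,-1,2,2,0,2,0,0,2,-2],[-1,1,-1,1,-1,1,0,-2,0,0,2,0,-2,2],[0,0,0,0,0,0,0,0,0,-2,0,0,0,0],[0,0,0,0,0,0,0,0,0,0,-2,0,0,0],[0,0,0,0,0,0,0,0,0,0,0,-2,0,0],[0,0,0,0,0,0,0,0,0,0,0,0,-2,0],[-1,-1,1,1,-1,1,-2,0,0,-2,0,2,0,2],[1,-1,1,1,1,-1,0,2,2,0,-2,2,2,0],[0,0,0,0,0,0,0,0,0,0,0,0,0,-2],[-1,1,-1,-1,1,1,0,-2,-2,2,2,-2,0,0]]),([(0,[0,1,2,3,4,5]),(0,[0,2,1,3,4,5]),(0,[0,2,3,1,4,5]),(0,[2,0,3,4,1,5]),(0,[2,0,3,4,5,1]),(1,[0,3,1,4,5,2]),(1,[0,3,4,1,2,5]),(1,[0,3,4,1,5,2])],3,2,[[0,0,0,0,0,0,-2,0,0,0,0,0,0,0],[0,0,0,0,0,0,0,-2,0,0,0,0,0,0],[0,0,0,0,0,0,0,0,-2,0,0,0,0,0],[0,0,0,0,0,0,0,0,0,0,0,0,0,0],[2,0,0,0,0,0,2,2,2,0,0,0,0,0],[1,1,1,-1,-1,1,2,0,2,0,2,-2,2,0],[-1,1,-1,1,1,-1,0,0,-2,2,0,2,-2,0],[0,0,0,0,0,0,0,0,0,-2,0,0,0,0],[0,0,0,0,0,0,0,0,0,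0,-2,0,0,0],[3,-1,1,1,-1,1,2,2,2,-2,0,-2,0,-2],[-2,0,0,0,2,-2,-2,0,-2,2,-2,2,-2,2],[-2,0,0,0,0,0,-2,0,-2,0,0,2,0,0],[0,0,0,0,0,0,0,0,2,0,0,0,2,0],[-2,0,0,0,0,0,-2,-2,0,0,0,0,0,2],[2,0,0,0,0,2,2,0,0,0,2,-2,0,-2]]),([(0,[0,1,2,3,4,5]),(0,[0,2,3,1,4,5]),(0,[0,2,3,4,1,5]),(0,[2,0,3,4,1,5]),(0,[2,0,3,4,5,1]),(0,[2,3,0,4,5,1]),(0,[2,3,4,5,0,1]),(1,[0,1,2,3,4,5])],1,2,[[0,0,0,0,0,0,-2,0,0,0,0,0,0,0],[0,0,0,0,0,0,0,0,0,0,0,0,0,0],[0,0,0,0,0,0,0,-2,0,0,0,0,0,0],[0,0,0,0,0,0,0,0,-2,0,0,0,0,0],[2,0,0,0,0,0,2,2,2,0,0,0,0,0],[0,0,0,0,0,0,2,0,0,0,0,0,0,2],[0,2,0,0,0,0,0,0,0,2,2,0,0,-2],[0,0,0,0,0,0,0,0,0,-2,0,0,0,0],[0,0,0,0,0,0,0,0,0,0,-2,0,0,0],[1,-1,1,1,-1,-1,0,2,0,-2,-2,0,-2,0],[-1,1,1,-1,1,1,-2,-2,0,2,2,2,2,-2],[0,0,0,0,0,0,0,0,0,0,0,-2,0,0],[1,-1,-1,1,1,-1,2,2,2,0,-2,-2,0,2],[-2,0,0,0,0,2,-2,-2,-2,0,2,2,2,0],[0,0,0,0,0,0,0,0,0,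0,0,0,-2,0]]),([(0,[0,1,2,3,4,5]),(0,[0,2,1,3,4,5]),(0,[0,2,3,4,1,5]),(0,[2,0,3,1,4,5]),(0,[2,0,3,4,5,1]),(1,[0,3,1,2,4,5]),(1,[0,3,1,4,5,2]),(1,[0,3,4,1,2,5])],2,2,[[0,0,0,0,0,0,-2,0,0,0,0,0,0,0],[0,0,0,0,0,0,0,-2,0,0,0,0,0,0],[0,0,0,0,0,0,0,0,0,0,0,0,0,0],[0,0,0,0,0,0,0,0,-2,0,0,0,0,0],[2,0,0,0,0,0,2,2,2,0,0,0,0,0],[1,1,1,-1,-1,1,2,0,2,0,2,0,-2,2],[0,0,0,0,0,0,0,0,0,-2,0,0,0,0],[-1,1,-1,1,1,-1,0,0,-2,2,0,0,2,-2],[0,0,0,0,0,0,0,0,0,0,-2,0,0,0],[0,0,0,0,0,0,0,2,0,0,0,2,0,0],[1,-1,1,1,1,-1,0,0,0,0,-2,-2,0,-2],[-2,0,0,0,0,0,-2,0,-2,0,0,0,2,0],[0,0,0,0,0,0,0,0,2,0,0,0,0,2],[0,0,0,2,0,0,0,-2,-2,2,0,-2,0,-2],[0,0,0,-2,0,2,0,0,2,-2,2,2,-2,2]]),([(0,[0,1,2,3,4,5]),(0,[0,2,3,1,4,5]),(0,[0,2,3,4,1,5]),(0,[2,0,3,1,4,5]),(0,[2,0,3,4,5,1]),(0,[2,3,0,4,1,5]),(0,[2,3,4,0,1,5]),(1,[0,1,2,3,4,5])],1,2,[[0,0,0,0,0,0,-2,0,0,0,0,0,0,0],[0,0,0,0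,0,0,0,0,0,0,0,0,0,0],[0,0,0,0,0,0,0,-2,0,0,0,0,0,0],[0,0,0,0,0,0,0,0,-2,0,0,0,0,0],[2,0,0,0,0,0,2,2,2,0,0,0,0,0],[0,0,0,0,0,0,2,0,0,0,0,0,0,2],[0,0,0,0,0,0,0,0,0,-2,0,0,0,0],[0,2,0,0,0,0,0,0,0,2,2,0,0,-2],[0,0,0,0,0,0,0,0,0,0,-2,0,0,0],[1,-1,1,1,1,-1,0,2,2,0,-2,2,2,0],[0,0,0,0,0,0,0,0,0,0,0,-2,0,0],[-1,1,1,-1,-1,1,-2,-2,-2,0,2,0,-2,-2],[0,0,0,0,0,0,0,0,0,0,0,0,-2,0],[-1,1,-1,1,-1,1,0,0,-2,2,2,-2,0,0],[0,-2,0,0,2,0,0,0,2,-2,-2,2,2,2]]),([(0,[0,1,2,3,4,5]),(0,[0,2,1,3,4,5]),(0,[0,2,3,4,1,5]),(0,[2,0,3,1,4,5]),(0,[2,0,3,4,5,1]),(0,[2,3,0,1,4,5]),(0,[2,3,0,4,1,5]),(0,[2,3,4,5,0,1])],2,2,[[0,0,0,0,0,0,-2,0,0,0,0,0,0,0],[0,0,0,0,0,0,0,-2,0,0,0,0,0,0],[0,0,0,0,0,0,0,0,0,0,0,0,0,0],[0,0,0,0,0,0,0,0,-2,0,0,0,0,0],[2,0,0,0,0,0,2,2,2,0,0,0,0,0],[1,1,1,1,-1,-1,2,2,0,2,0,2,0,-2],[0,0,0,0,0,0,0,0,0,-2,0,0,0,0],[-1,1,-1,-1,1,1,0,-2,0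,0,2,-2,0,2],[0,0,0,0,0,0,0,0,0,0,-2,0,0,0],[0,0,0,0,0,0,0,0,0,0,0,-2,0,0],[0,0,0,0,0,0,0,0,0,0,0,0,-2,0],[-1,-1,1,-1,1,1,-2,0,0,-2,0,0,2,2],[1,-1,1,1,1,-1,0,2,2,0,-2,2,2,0],[-1,1,-1,1,-1,1,0,-2,-2,2,2,0,-2,0],[0,0,0,0,0,0,0,0,0,0,0,0,0,-2]]),([(0,[0,1,2,3,4,5]),(0,[0,2,3,1,4,5]),(0,[0,2,3,4,1,5]),(0,[2,0,3,1,4,5]),(0,[2,0,3,4,1,5]),(0,[2,3,0,4,5,1]),(1,[0,1,2,3,4,5]),(1,[0,3,1,2,4,5])],1,2,[[0,0,0,0,0,0,-2,0,0,0,0,0,0,0],[0,0,0,0,0,0,0,0,0,0,0,0,0,0],[0,0,0,0,0,0,0,-2,0,0,0,0,0,0],[0,0,0,0,0,0,0,0,-2,0,0,0,0,0],[2,0,0,0,0,0,2,2,2,0,0,0,0,0],[0,0,0,0,0,0,2,0,0,0,0,0,2,0],[0,0,0,0,0,0,0,0,0,-2,0,0,0,0],[0,0,0,0,0,0,0,0,0,0,-2,0,0,0],[0,2,0,0,0,0,0,0,0,2,2,0,-2,0],[0,0,0,0,0,0,0,2,0,0,0,0,0,2],[0,0,2,0,0,0,-2,-2,0,0,0,2,-2,-2],[0,0,0,0,0,0,0,0,0,0,0,-2,0,0],[1,1,-1,1,1,-1,2,2,2,2,2,-2,0,0],[-1,-1,1,1,-1,1,-2,-2,-2,0,-2,2,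0,-2],[-1,-1,-1,-1,1,1,0,0,0,-2,0,0,2,2]]),([(0,[0,2,3,4,1,5]),(0,[2,0,3,1,4,5]),(0,[2,3,0,4,5,1]),(1,[0,1,3,2,4,5]),(1,[0,1,3,4,2,5]),(2,[0,1,3,4,2,5]),(2,[0,1,4,2,3,5]),(2,[0,3,1,5,2,4])],1,2,[[0,0,0,0,-1,0,1,1,1,0,0,1,0,1],[0,0,0,0,0,0,0,0,0,0,0,0,0,0],[0,0,0,0,1,0,-1,1,-1,2,0,-1,0,-1],[0,0,0,0,0,0,-2,0,0,0,0,0,0,0],[2,0,0,0,0,0,2,-2,0,-2,0,0,0,0],[1,1,0,0,0,-1,1,1,-1,-2,-2,1,1,0],[0,0,0,0,0,0,0,-2,0,0,0,0,0,0],[0,0,0,0,1,0,1,-1,-1,0,2,-1,0,-1],[-1,1,0,0,0,1,-3,1,1,2,0,-1,-1,0],[0,0,1,1,-1,0,-1,1,1,0,0,1,-1,0],[-1,-1,1,-1,1,1,0,-2,2,2,2,-2,0,0],[0,0,0,0,0,0,0,0,-2,0,0,0,0,0],[1,1,-1,1,0,-1,1,1,-1,-2,-2,1,0,1],[-1,-1,0,0,0,1,1,-1,1,0,2,-1,1,0],[0,0,0,0,0,0,0,2,0,0,-2,2,0,0]])]"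

definition TABL :: "(nat list \<times> nat) list" where
  "TABL = [([0,1,2,3,4,5],0),([0,1,2,3,4,5],0),([1,2,3,4,5,0],0),([0,1,2,3,4,5],1),([2,1,0,5,4,3],1),([0,1,2,3,4,5],2),([2,3,4,5,0,1],0),([0,1,2,3,4,5],3),([1,2,3,4,5,0],1),([5,4,3,2,1,0],1),([0,1,2,3,4,5],4),([0,1,2,3,4,5],5),([1,0,5,4,3,2],1),([0,1,2,3,4,5],6),([1,2,3,4,5,0],2),([0,1,2,3,4,5],7),([0,1,2,3,4,5],8),([4,5,0,1,2,3],3),([4,5,0,1,2,3],1),([1,0,5,4,3,2],7),([4,5,0,1,2,3],5),([0,1,2,3,4,5],9),([2,3,4,5,0,1],3),([4,5,0,1,2,3],0),([3,4,5,0,1,2],0),([2,3,4,5,0,1],9),([1,2,3,4,5,0],3),([2,1,0,5,4,3],7),([3,4,5,0,1,2],5),([3,4,5,0,1,2],1),([2,3,4,5,0,1],1),([2,3,4,5,0,1],5),([4,3,2,1,0,5],1),([4,5,0,1,2,3],0),([4,5,0,1,2,3],4),([4,5,0,1,2,3],3),([1,2,3,4,5,0],4),([0,1,2,3,4,5],10),([1,2,3,4,5,0],5),([0,1,2,3,4,5],9),([2,3,4,5,0,1],4),([0,1,2,3,4,5],5),([3,4,5,0,1,2],4),([3,4,5,0,1,2],6),([2,3,4,5,0,1],10),([0,1,2,3,4,5],7),([2,3,4,5,0,1],6),([5,4,3,2,1,0],1),([0,5,4,3,2,1],1),([2,3,4,5,0,1],7),([1,2,3,4,5,0],6),([2,3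,4,5,0,1],6),([1,2,3,4,5,0],10),([2,3,4,5,0,1],4),([2,3,4,5,0,1],2),([3,2,1,0,5,4],1),([1,2,3,4,5,0],7),([2,3,4,5,0,1],3),([4,5,0,1,2,3],6),([0,1,2,3,4,5],8),([1,2,3,4,5,0],8),([3,4,5,0,1,2],6),([5,0,1,2,3,4],3),([1,0,5,4,3,2],7),([3,4,5,0,1,2],1),([0,1,2,3,4,5],2),([5,0,1,2,3,4],4),([0,1,2,3,4,5],10),([5,0,1,2,3,4],6),([0,1,2,3,4,5],6),([2,1,0,5,4,3],7),([0,1,2,3,4,5],1),([5,0,1,2,3,4],1),([5,0,1,2,3,4],6),([0,5,4,3,2,1],7),([2,3,4,5,0,1],10),([4,5,0,1,2,3],6),([4,5,0,1,2,3],4),([5,0,1,2,3,4],5),([5,0,1,2,3,4],4),([1,2,3,4,5,0],9),([4,5,0,1,2,3],5),([1,2,3,4,5,0],10),([0,1,2,3,4,5],4),([3,4,5,0,1,2],3),([3,4,5,0,1,2],4),([5,0,1,2,3,4],0),([4,5,0,1,2,3],1),([3,4,5,0,1,2],5),([2,1,0,5,4,3],1),([3,2,1,0,5,4],1),([2,3,4,5,0,1],5),([2,3,4,5,0,1],7),([0,1,2,3,4,5],3),([2,3,4,5,0,1],9),([0,1,2,3,4,5],0),([5,0,1,2,3,4],0),([5,0,1,2,3,4],3),([1,2,3,4,5,0],9),([1,2,3,4,5,0],5),([1,2,3,4,5,0],7),([4,3,2,1,0,5],1),([3,4,5,0,1,2],3),([1,2,3,4,5,0],8),([0,5,4,3,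2,1],7),([1,2,3,4,5,0],2),([1,2,3,4,5,0],6),([1,2,3,4,5,0],1),([5,0,1,2,3,4],5),([1,2,3,4,5,0],4),([5,0,1,2,3,4],1),([1,0,5,4,3,2],1),([1,2,3,4,5,0],3),([1,2,3,4,5,0],0),([2,3,4,5,0,1],2),([2,3,4,5,0,1],1),([0,5,4,3,2,1],1),([2,3,4,5,0,1],0),([3,4,5,0,1,2],0),([0,1,2,3,4,5],0)]"

lemma kc0: "kindcheck 0 [2,1,3,4,5] [1,2,3,4,5] [[2,1,3,5,4],[2,1,4,3,5],[2,1,4,5,3],[2,1,5,3,4],[2,3,1,4,5],[2,4,1,3,5],[2,5,1,3,4],[3,1,2,4,5]] [[0,-12,-12,24,0,12,12,0,-24,0,-12,12,-12,12,0],[0,-30,-6,18,18,18,-6,18,-30,4,-20,28,4,4,-20],[0,18,18,-18,-18,-6,-6,6,6,-12,0,0,0,0,12],[0,9,-3,-3,-3,-3,-15,-15,33,14,14,-34,2,2,2],[0,-6,-6,6,6,-6,-6,6,6,28,-8,-8,-8,-8,4],[0,21,-3,-15,-3,-15,9,-3,9,-14,22,-14,-2,10,-2],[0,-6,6,6,-6,-6,6,6,-6,-8,-8,28,4,-8,-8],[0,-27,9,9,9,9,-3,-3,-3,6,6,6,-6,-6,-6]] 48 [[0,0,0,0,0,0,-48],[12,0,9,-3,-3,-3,12],[12,0,-3,9,-3,-3,12],[12,0,-3,-3,9,-3,12],[12,0,-3,-3,-3,9,12],[0,12,9,-3,-3,-3,12],[0,12,-3,9,-3,-3,12],[0,12,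-3,-3,9,-3,12],[0,12,-3,-3,-3,9,12],[-4,-4,10,10,-2,-2,-8],[-4,-4,10,-2,10,-2,-8],[-4,-4,10,-2,-2,10,-8],[-4,-4,-2,10,10,-2,-8],[-4,-4,-2,10,-2,10,-8],[-4,-4,-2,-2,10,10,-8]]"
  by code_simp

lemma kc1: "kindcheck 1 [1,2,3,4,5] [1,3,2,4,5] [[1,2,3,5,4],[1,2,4,3,5],[1,2,4,5,3],[1,2,5,3,4],[1,3,4,5,2],[1,4,3,5,2],[1,5,3,4,2],[2,1,3,4,5]] [[3,3,-17,10,1,-6,10,1,-8,10,1,-8,-15,12,3],[12,-6,-20,-2,16,-6,16,-2,-20,-2,16,-2,-6,12,-6],[-3,-3,20,-7,-7,6,-7,2,2,-7,2,2,-3,-3,6],[-6,-6,10,10,-8,12,-8,-8,10,-8,-8,10,12,-6,-6],[15,-3,-10,-1,-1,-12,17,-10,-10,-1,8,8,-3,-3,6],[-3,6,2,-7,2,-3,-7,20,-7,2,-7,2,-3,6,-3],[-3,6,2,2,-7,-3,-7,-7,20,2,2,-7,6,-3,-3],[-18,9,3,3,3,9,3,3,3,-6,-6,-6,0,0,0]] 36 [[3,3,-6,0,0,0,12],[3,-6,3,0,0,0,12],[10,1,1,6,-3,-3,-8],[10,1,1,-3,6,-3,-8],[10,1,1,-3,-3,6,-8],[-6,3,3,0,0,0,12],[1,10,1,6,-3,-3,-8],[1,10,1,-3,6,-3,-8],[1,10,1,-3,-3,6,-8],[1,1,10,6,-3,-3,-8],[1,1,10,-3,6,-3,-8],[1,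1,10,-3,-3,6,-8],[-6,-6,-6,9,9,0,12],[-6,-6,-6,9,0,9,12],[-6,-6,-6,0,9,9,12]]"
  by code_simp

lemma kc2: "kindcheck 2 [1,2,5,4,3] [1,2,3,4,5] [[1,4,2,5,3],[1,4,3,5,2],[1,4,5,2,3],[2,1,4,5,3],[2,5,1,4,3],[2,5,4,1,3],[3,4,1,2,5],[3,5,2,1,4]] [[10,-11,18,-19,2,-11,2,-3,2,-19,44,-3,-11,10,-11],[15,15,-36,3,3,-6,3,6,-18,3,-18,6,15,15,-6],[10,-11,-3,2,2,-11,-19,18,2,44,-19,-3,-11,-11,10],[-6,15,6,-18,3,15,-18,6,3,3,3,-36,-6,15,15],[-11,10,18,2,-19,-11,-19,-3,44,2,2,-3,10,-11,-11],[-11,10,-3,2,2,-11,44,-3,-19,-19,2,18,-11,-11,10],[-11,-11,-3,-19,44,10,2,18,-19,2,2,-3,10,-11,-11],[-11,-11,-3,44,-19,10,2,-3,2,2,-19,18,-11,10,-11]] 84 [[15,15,-6,-4,-4,-4,4],[15,-6,15,-4,-4,-4,4],[6,-15,-15,18,-3,-3,24],[24,3,3,-5,16,-5,-16],[24,3,3,-5,-5,16,-16],[-6,15,15,-4,-4,-4,4],[3,24,3,16,-5,-5,-16],[-15,6,-15,-3,18,-3,24],[3,24,3,-5,-5,16,-16],[3,3,24,16,-5,-5,-16],[3,3,24,-5,16,-5,-16],[-15,-15,6,-3,-3,18,24],[-6,-6,-6,17,17,-4,4],[-6,-6,-6,17,-4,17,4],[-6,-6,-6,-4,17,17,4]]"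
  by code_simp

lemma kinds_good: "\<forall>k<3. good (vF (FK k)) (of_int (PHI k))"
proof (intro allI impI)
  fix k :: nat assume "k < 3"
  hence "k = 0 \<or> k = 1 \<or> k = 2" by auto
  thus "good (vF (FK k)) (of_int (PHI k))" using kindcheck_good[OF kc0] kindcheck_good[OF kc1] kindcheck_good[OF kc2] by auto
qed

lemma repdata_check: "list_all2 (\<lambda>rep (J, ks, d, lam). repcheck rep J ks d lam) REPS REPDATA"
  by code_simp

definition tabok :: "nat list \<Rightarrow> nat list \<times> nat \<Rightarrow> bool" where
  "tabok t x \<longleftrightarrow> sameC (0 # t) C0L \<or> (permL (fst x) \<and> snd x < length REPS \<and>
     sameC (map (lp (fst x)) C0L) C0L \<and> sameC (map (lp (fst x)) (0 # t)) (REPS ! snd x))"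

lemma tab_check: "list_all2 tabok P5 TABL"
  by code_simp



lemma C0L_nth: "k < 6 \<Longrightarrow> C0L ! k = k"
  unfolding C0L_def using lt6[of k] by auto

lemma pair_circuit:
  assumes md: "minimal_description P_TSP6 eqs ineqs"
    and T1: "ham_cycle6 T1" and T2: "ham_cycle6 T2" and ne: "T1 \<noteq> T2"
  shows "is_circuit eqs ineqs (chi T2 - chi T1)"
proof -
  obtain vs1 where vs1: "vs1 \<in> perms6" "T1 = cycE vs1" using T1 ham_iff by blast
  obtain vs2 where vs2: "vs2 \<in> perms6" "T2 = cycE vs2" using T2 ham_iff by blast
  have pi: "lp vs1 permutes {..<6}" using permL_permutes vs1(1) permL_perms6 by blast
  define \<sigma>0 where "\<sigma>0 = inv (lp vs1)"
  have s0: "\<sigma>0 permutes {..<6}" unfolding \<sigma>0_def using permutes_inv[OF pi] .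
  have l1: "length vs1 = 6" using vs1(1) unfolding perms6_def by simp
  have m1: "map \<sigma>0 vs1 = C0L"
  proof (rule nth_equalityI)
    show "length (map \<sigma>0 vs1) = length C0L" using l1 by (simp add: C0L_def)
    fix k assume "k < length (map \<sigma>0 vs1)"
    hence k: "k < 6" using l1 by simp
    have "vs1 ! k = lp vs1 k" unfolding lp_def using k by simp
    hence "\<sigma>0 (vs1 ! k) = k" unfolding \<sigma>0_def using permutes_inverses(2)[OF pi] by simp
    thus "map \<sigma>0 vs1 ! k = C0L ! k" using k l1 C0L_nth by simp
  qed
  define w where "w = map \<sigma>0 vs2"
  have wp: "w \<in> perms6" unfolding w_def by (rule map_perms6[OF s0 vs2(1)])
  obtain t where t: "t \<in> set P5" "cycE w = cycE (0 # t)" using canon[OF wp] by blast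
  have e1: "emap \<sigma>0 ` T1 = cycE C0L" using cycE_map[OF s0 vs1(1)] vs1(2) m1 by simp
  have e2: "emap \<sigma>0 ` T2 = cycE (0 # t)" using cycE_map[OF s0 vs2(1)] vs2(2) t(2) unfolding w_def by simp
  have inj0: "\<And>A B. emap \<sigma>0 ` A = emap \<sigma>0 ` B \<Longrightarrow> A = B"
  proof -
    fix A B assume "emap \<sigma>0 ` A = emap \<sigma>0 ` B"
    hence "emap (inv \<sigma>0) ` emap \<sigma>0 ` A = emap (inv \<sigma>0) ` emap \<sigma>0 ` B" by simp
    thus "A = B" by (simp add: image_image emap_inv2[OF s0])
  qed
  obtain i where i: "i < length P5" "P5 ! i = t" using t(1) by (metis in_set_conv_nth)
  have la: "length P5 = length TABL" "tabok (P5 ! i) (TABL ! i)"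
    using tab_check i(1) unfolding list_all2_conv_all_nth by auto
  define \<rho> where "\<rho> = fst (TABL ! i)"
  define r where "r = snd (TABL ! i)"
  have nsame: "\<not> sameC (0 # t) C0L"
  proof
    assume "sameC (0 # t) C0L"
    hence "emap \<sigma>0 ` T2 = emap \<sigma>0 ` T1" using e1 e2 sameC_eq by simp
    thus False using inj0 ne by metis
  qed
  have tb: "permL \<rho>" "r < length REPS" "sameC (map (lp \<rho>) C0L) C0L" "sameC (map (lp \<rho>) (0 # t)) (REPS ! r)"
    using la(2) nsame i(2) unfolding tabok_def \<rho>_def r_def by auto
  have rp: "lp \<rho> permutes {..<6}" by (rule permL_permutes[OF tb(1)])
  define \<sigma> where "\<sigma> = lp \<rho> \<circ> \<sigma>0"
  have sp: "\<sigma> permutes {..<6}" unfolding \<sigma>_def by (rule permutes_compose[OF s0 rp])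
  have ec: "\<And>A. emap \<sigma> ` A = emap (lp \<rho>) ` emap \<sigma>0 ` A"
    unfolding \<sigma>_def by (simp add: image_image emap_comp[OF s0 rp])
  have f1: "emap \<sigma> ` T1 = cycE C0L"
    unfolding ec e1 cycE_map[OF rp C0L_perms6, symmetric] using sameC_eq[OF tb(3)] .
  have f2: "emap \<sigma> ` T2 = cycE (REPS ! r)"
    unfolding ec e2 cycE_map[OF rp P5_perms6[OF t(1)], symmetric] using sameC_eq[OF tb(4)] .
  have lr: "length REPS = length REPDATA" "(\<lambda>rep (J, ks, d, lam). repcheck rep J ks d lam) (REPS ! r) (REPDATA ! r)"
    using repdata_check tb(2) unfolding list_all2_conv_all_nth by auto
  obtain J ks d lam where jd: "REPDATA ! r = (J, ks, d, lam)" by (metis prod.exhaust)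
  have rc: "repcheck (REPS ! r) J ks d lam" using lr(2) jd by simp
  define gr where "gr = chi (cycE (REPS ! r)) - chi (cycE C0L)"
  have RS: "\<forall>(f, \<phi>)\<in>set (goodlist J). good f \<phi> \<and> f \<bullet> gr = 0"
    "\<forall>y\<in>Dset. (\<forall>(f, \<phi>)\<in>set (goodlist J). f \<bullet> y = 0) \<longrightarrow> (\<exists>s. y = s *\<^sub>R gr)"
    using repcheck_sound[OF rc kinds_good] unfolding gr_def by auto
  have chiT: "\<And>T. chi T = pullv \<sigma> (chi (emap \<sigma> ` T))"
    using chi_emap[OF sp] pullv_pullv1[OF sp] by simp
  have gg: "chi T2 - chi T1 = pullv \<sigma> gr"
    unfolding gr_def pullv_diff using chiT[of T1] chiT[of T2] f1 f2 by simp
  define G where "G = map (\<lambda>(f, \<phi>). (pullv \<sigma> f, \<phi>)) (goodlist J)"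
  show ?thesis
  proof (rule circuit_from_goods[OF md T1 T2 refl])
    show "chi T2 - chi T1 \<noteq> 0" using ne chi_inj by force
    show "\<forall>(f, \<phi>)\<in>set G. good f \<phi> \<and> f \<bullet> (chi T2 - chi T1) = 0"
    proof (intro ballI, clarify)
      fix f' \<phi> assume "(f', \<phi>) \<in> set G"
      then obtain f where f: "(f, \<phi>) \<in> set (goodlist J)" "f' = pullv \<sigma> f" unfolding G_def by auto
      have "good f \<phi>" "f \<bullet> gr = 0" using RS(1) f(1) by auto
      thus "good f' \<phi> \<and> f' \<bullet> (chi T2 - chi T1) = 0"
        unfolding f(2) gg using good_pullv[OF sp] pullv_inner[OF sp] by simp
    qed
    show "\<forall>y\<in>Dset. (\<forall>(f, \<phi>)\<in>set G. f \<bullet> y = 0) \<longrightarrow> (\<exists>s. y = s *\<^sub>R (chi T2 - chi T1))"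
    proof (intro ballI impI)
      fix y assume y: "y \<in> Dset" "\<forall>(f, \<phi>)\<in>set G. f \<bullet> y = 0"
      define y' where "y' = pullv (inv \<sigma>) y"
      have y'D: "y' \<in> Dset" unfolding y'_def by (rule pullv_D[OF permutes_inv[OF sp] y(1)])
      have yy: "pullv \<sigma> y' = y" unfolding y'_def by (rule pullv_pullv1[OF sp])
      have "\<forall>(f, \<phi>)\<in>set (goodlist J). f \<bullet> y' = 0"
      proof (intro ballI, clarify)
        fix f \<phi> assume f: "(f, \<phi>) \<in> set (goodlist J)"
        hence "(pullv \<sigma> f, \<phi>) \<in> set G" unfolding G_def by force
        hence "pullv \<sigma> f \<bullet> y = 0" using y(2) by fastforce
        thus "f \<bullet> y' = 0" using pullv_inner[OF sp, of f y'] yy by simp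
      qed
      then obtain s where "y' = s *\<^sub>R gr" using RS(2) y'D by blast
      hence "y = s *\<^sub>R pullv \<sigma> gr" using yy pullv_scale by metis
      thus "\<exists>s. y = s *\<^sub>R (chi T2 - chi T1)" using gg by auto
    qed
  qed
qed

lemma step_extreme:
  assumes md: "minimal_description P_TSP6 eqs ineqs"
    and u: "u extreme_point_of P_TSP6" and v: "v extreme_point_of P_TSP6" and uv: "u \<noteq> v"
  shows "circuit_step eqs ineqs u v"
proof -
  have PL: "P_TSP6 = lin_sys_set eqs ineqs" by (rule md_P[OF md])
  obtain T1 where T1: "ham_cycle6 T1" "u = chi T1"
    using extreme_point_of_convex_hull[of u "chi ` {T. ham_cycle6 T}"] u unfolding P_TSP6_def by blast
  obtain T2 where T2: "ham_cycle6 T2" "v = chi T2"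
    using extreme_point_of_convex_hull[of v "chi ` {T. ham_cycle6 T}"] v unfolding P_TSP6_def by blast
  have ne: "T1 \<noteq> T2" using uv T1 T2 by auto
  have circ: "is_circuit eqs ineqs (v - u)" using pair_circuit[OF md T1(1) T2(1) ne] T1 T2 by simp
  have uP: "u \<in> P_TSP6" "v \<in> P_TSP6" using u v unfolding extreme_point_of_def by auto
  have max: "\<forall>\<beta>>1. u + \<beta> *\<^sub>R (v - u) \<notin> lin_sys_set eqs ineqs"
  proof (intro allI impI notI)
    fix \<beta> :: real assume b: "\<beta> > 1" and inP: "u + \<beta> *\<^sub>R (v - u) \<in> lin_sys_set eqs ineqs"
    define w where "w = u + \<beta> *\<^sub>R (v - u)"
    have wP: "w \<in> P_TSP6" using inP PL unfolding w_def by simp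
    have vw: "v = (1 - 1 / \<beta>) *\<^sub>R u + (1 / \<beta>) *\<^sub>R w"
      using b unfolding w_def by (simp add: algebra_simps)
    have uw: "u \<noteq> w"
    proof
      assume "u = w"
      hence "\<beta> *\<^sub>R (v - u) = 0" unfolding w_def by simp
      thus False using b uv by simp
    qed
    have "v \<in> open_segment u w" unfolding in_segment(2) using uw b vw
      by (intro conjI exI[of _ "1 / \<beta>"]) auto
    thus False using v uP wP unfolding extreme_point_of_def by blast
  qed
  show ?thesis unfolding circuit_step_def Let_def
    using uP PL circ max by (intro conjI exI[of _ "v - u"] exI[of _ "1::real"]) auto
qed

lemma dist_extreme:
  assumes md: "minimal_description P_TSP6 eqs ineqs"
    and u: "u extreme_point_of P_TSP6" and v: "v extreme_point_of P_TSP6"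
  shows "circuit_distance eqs ineqs u v = (if u = v then 0 else 1)"
proof -
  have PL: "P_TSP6 = lin_sys_set eqs ineqs" by (rule md_P[OF md])
  have uP: "u \<in> lin_sys_set eqs ineqs" "v \<in> lin_sys_set eqs ineqs" using u v PL unfolding extreme_point_of_def by auto
  show ?thesis
  proof (cases "u = v")
    case True
    have "circuit_walk eqs ineqs u v 0" unfolding circuit_walk_def using True uP
      by (intro exI[of _ "\<lambda>_. u"]) auto
    thus ?thesis using True unfolding circuit_distance_def by simp
  next
    case False
    have w1: "circuit_walk eqs ineqs u v 1" unfolding circuit_walk_def
      using uP step_extreme[OF md u v False]
      by (intro exI[of _ "\<lambda>i. if i = 0 then u else v"]) (auto simp: le_Suc_eq)
    have w0: "\<not> circuit_walk eqs ineqs u v 0" unfolding circuit_walk_def using False by auto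
    have "(LEAST l. circuit_walk eqs ineqs u v l) = 1"
    proof (rule Least_equality[where P = "\<lambda>l. circuit_walk eqs ineqs u v l"])
      show "circuit_walk eqs ineqs u v 1" by (rule w1)
      fix m assume "circuit_walk eqs ineqs u v m"
      thus "1 \<le> m" using w0 by (cases m) auto
    qed
    thus ?thesis using False unfolding circuit_distance_def by simp
  qed
qed

lemma two_extreme: "\<exists>u v. u extreme_point_of P_TSP6 \<and> v extreme_point_of P_TSP6 \<and> u \<noteq> v"
proof (rule ccontr)
  assume "\<not> ?thesis"
  hence single: "\<forall>u v. u extreme_point_of P_TSP6 \<and> v extreme_point_of P_TSP6 \<longrightarrow> u = v" by blast
  have cP: "compact P_TSP6" "convex P_TSP6" unfolding P_TSP6_def
    by (auto intro!: finite_imp_compact_convex_hull)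
  have KM: "P_TSP6 = convex hull {x. x extreme_point_of P_TSP6}" using Krein_Milman_Minkowski[OF cP] .
  have h1: "ham_cycle6 (cycE C0L)" using C0L_perms6 ham_iff by blast
  have "[2,1,3,4,5] \<in> set P5" unfolding P5_def by code_simp
  hence "0 # [2,1,3,4,5] \<in> perms6" by (rule P5_perms6)
  hence h2: "ham_cycle6 (cycE [0,2,1,3,4,5])" using ham_iff by auto
  have nd: "cycE C0L \<noteq> cycE [0,2,1,3,4,5]"
  proof
    assume eq: "cycE C0L = cycE [0,2,1,3,4,5]"
    have "cycedge C0L 0 1" unfolding C0L_def by code_simp
    hence "ab 0 1 \<in> cycE C0L" using ab_in_cycE[of 0 1 C0L] by simp
    have "\<not> cycedge [0,2,1,3,4,5] 0 1" by code_simp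
    hence "ab 0 1 \<notin> cycE [0,2,1,3,4,5]" using ab_in_cycE[of 0 1 "[0,2,1,3,4,5]"] by simp
    moreover note \<open>ab 0 1 \<in> cycE C0L\<close>
    ultimately show False using eq by simp
  qed
  have c1: "chi (cycE C0L) \<in> P_TSP6" "chi (cycE [0,2,1,3,4,5]) \<in> P_TSP6" using chi_in_P h1 h2 by auto
  have neq: "chi (cycE C0L) \<noteq> chi (cycE [0,2,1,3,4,5])" using nd chi_inj by metis
  obtain a where "{x. x extreme_point_of P_TSP6} \<subseteq> {a}" using single by blast
  hence "convex hull {x. x extreme_point_of P_TSP6} \<subseteq> convex hull {a}" by (rule hull_mono)
  hence "P_TSP6 \<subseteq> convex hull {a}" using KM by simp
  hence "P_TSP6 \<subseteq> {a}" by simp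
  thus False using c1 neq by blast
qed

theorem lemma7:
  fixes eqs ineqs :: "((real ^ edge6) \<times> real) list"
  assumes "minimal_description P_TSP6 eqs ineqs"
  shows "circuit_diameter eqs ineqs = 1"
proof -
  have PL: "lin_sys_set eqs ineqs = P_TSP6" using md_P[OF assms] by simp
  let ?S = "{circuit_distance eqs ineqs u v | u v. u extreme_point_of P_TSP6 \<and> v extreme_point_of P_TSP6}"
  have sub: "?S \<subseteq> {0, 1}"
  proof
    fix y assume "y \<in> ?S"
    then obtain u v where "y = circuit_distance eqs ineqs u v" "u extreme_point_of P_TSP6" "v extreme_point_of P_TSP6"
      by blast
    thus "y \<in> {0, 1}" using dist_extreme[OF assms] by simp
  qed
  obtain u v where uv: "u extreme_point_of P_TSP6" "v extreme_point_of P_TSP6" "u \<noteq> v" using two_extreme by blast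
  have "circuit_distance eqs ineqs u v = 1" using dist_extreme[OF assms uv(1,2)] uv(3) by simp
  hence one: "1 \<in> ?S" using uv(1,2) by (intro CollectI exI[of _ u] exI[of _ v]) simp
  have fin: "finite ?S" by (rule finite_subset[OF sub]) simp
  have "Max ?S = 1"
  proof (rule Max_eqI[OF fin])
    fix y assume y: "y \<in> ?S"
    have "y \<in> {0, 1}" by (rule subsetD[OF sub y])
    thus "y \<le> 1" by auto
  qed (rule one)
  thus ?thesis unfolding circuit_diameter_def Let_def PL .
qed


end
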